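(* Let $\gamma=(\exp X_L,\exp X_R)$ be a synchronized element of $\widetilde{G}\times\widetilde{G}$ and, for $t\in\mathbb{R}$, let $\gamma^t=(\exp(tX_L),\exp(tX_R))$. Then the absolute causal subset $D(\gamma)$ equals $\bigcup_{n\geq 1} C(\gamma^{1/n})$.
   Context: $G=\mathrm{PSL}(2,\mathbb{R})$, $\mathcal{G}=\mathfrak{sl}(2,\mathbb{R})$, $\widetilde{G}$ is the universal cover of $G$, identified with the universal cover $\widetilde{\mathrm{AdS}}$ of anti-de Sitter space ($\mathrm{SL}(2,\mathbb{R})$ with the Lorentzian metric given by the Killing form, time-oriented). $\widetilde G\times\widetilde G$ acts isometrically on $\widetilde{\mathrm{AdS}}$ by $(g_L,g_R)\cdot x=g_Lxg_R^{-1}$. An element $A\in\mathcal G$ is hyperbolic, parabolic, elliptic if $\det A<0$, $\det A=0$ ($A\ne0$), $\det A>0$; an element of $\widetilde G$ is hyperbolic/parabolic/elliptic if it is the exponential of such an element. An element $(\gamma_L,\gamma_R)$ is synchronized if, up to permuting the two components, it is of one of the forms: $\gamma_L$ trivial and $\gamma_R$ hyperbolic; $\gamma_L$ trivial and $\gamma_R$ parabolic; both nontrivial hyperbolic; $\gamma_L$ parabolic and $\gamma_R$ hyperbolic; both nontrivial parabolic; $\gamma_L,\gamma_R$ elliptic and conjugate in $\widetilde G$. The flow $\gamma^t$ is generated by a Killing vector field $X_\gamma$. The standard causal subset $C(\gamma)$ is the set of $x\in\widetilde{\mathrm{AdS}}$ such that $\gamma x$ is not causally related to $x$. The absolute causal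 subset $D(\gamma)$ is the open set where $X_\gamma$ is spacelike; at $\tilde g$ with projection $g\in G$ the norm of $X_\gamma$ is $-\det(X_L-\mathrm{Ad}(g)X_R)$. *)

theory Defs
  imports "HOL-Analysis.Analysis"
begin

type_synonym mat2 = "real^2^2"

definition mat2 :: "real \<Rightarrow> real \<Rightarrow> real \<Rightarrow> real \<Rightarrow> mat2" where
  "mat2 a b c d = (\<chi> i j. if i = 1 then (if j = 1 then a else b) else (if j = 1 then c else d))"

definition sl2 :: "mat2 set" where
  "sl2 = {A. trace A = 0}"

primrec mpow :: "mat2 \<Rightarrow> nat \<Rightarrow> mat2" where
  "mpow A 0 = mat 1"
| "mpow A (Suc n) = A ** mpow A n"

definition mexp :: "mat2 \<Rightarrow> mat2" where
  "mexp A = (\<Sum>n. (1 / (fact n :: real)) *\<^sub>R mpow A n)"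

type_synonym cover = "real \<times> complex"

text \<open>(tau, w) maps to the matrix with x1 = r cos tau, x2 = r sin tau, (x3,x4) = w,
  r = sqrt (1 + |w|^2); its determinant is x1^2 + x2^2 - x3^2 - x4^2 = 1.\<close>
definition cov_proj :: "cover \<Rightarrow> mat2" where
  "cov_proj z = (let r = sqrt (1 + (cmod (snd z))\<^sup>2);
                     x1 = r * cos (fst z); x2 = r * sin (fst z);
                     x3 = Re (snd z); x4 = Im (snd z)
                 in mat2 (x1 + x3) (x4 - x2) (x4 + x2) (x1 - x3))"

definition te :: cover where "te = (0, 0)"

definition lift_end :: "cover \<Rightarrow> (real \<Rightarrow> mat2) \<Rightarrow> cover" where
  "lift_end x0 c = (THE y. \<exists>l. continuous_on {0..1} l \<and> l 0 = x0 \<and>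
                        (\<forall>s\<in>{0..1}. cov_proj (l s) = c s) \<and> l 1 = y)"

text \<open>Group structure of the universal cover (lifting along the straight path from te).\<close>
definition tmult :: "cover \<Rightarrow> cover \<Rightarrow> cover" where
  "tmult a b = lift_end a (\<lambda>s. cov_proj a ** cov_proj (s *\<^sub>R b))"

definition tinv :: "cover \<Rightarrow> cover" where
  "tinv a = lift_end te (\<lambda>s. matrix_inv (cov_proj (s *\<^sub>R a)))"

definition texp :: "mat2 \<Rightarrow> cover" where
  "texp X = lift_end te (\<lambda>s. mexp (s *\<^sub>R X))"

definition hyperbolic_el :: "cover \<Rightarrow> bool" where
  "hyperbolic_el g \<longleftrightarrow> (\<exists>A\<in>sl2. det A < 0 \<and> texp A = g)"

definition parabolic_el :: "cover \<Rightarrow> bool" where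
  "parabolic_el g \<longleftrightarrow> (\<exists>A\<in>sl2. A \<noteq> 0 \<and> det A = 0 \<and> texp A = g)"

definition elliptic_el :: "cover \<Rightarrow> bool" where
  "elliptic_el g \<longleftrightarrow> (\<exists>A\<in>sl2. det A > 0 \<and> texp A = g)"

definition conjugate_el :: "cover \<Rightarrow> cover \<Rightarrow> bool" where
  "conjugate_el a b \<longleftrightarrow> (\<exists>h. tmult (tmult h a) (tinv h) = b)"

definition sync_ordered :: "cover \<Rightarrow> cover \<Rightarrow> bool" where
  "sync_ordered gL gR \<longleftrightarrow>
     (gL = te \<and> hyperbolic_el gR)
   \<or> (gL = te \<and> parabolic_el gR)
   \<or> (hyperbolic_el gL \<and> hyperbolic_el gR \<and> gL \<noteq> te \<and> gR \<noteq> te)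
   \<or> (parabolic_el gL \<and> hyperbolic_el gR)
   \<or> (parabolic_el gL \<and> parabolic_el gR \<and> gL \<noteq> te \<and> gR \<noteq> te)
   \<or> (elliptic_el gL \<and> elliptic_el gR \<and> conjugate_el gL gR)"

definition synchronized :: "cover \<times> cover \<Rightarrow> bool" where
  "synchronized g \<longleftrightarrow> sync_ordered (fst g) (snd g) \<or> sync_ordered (snd g) (fst g)"

definition act :: "cover \<times> cover \<Rightarrow> cover \<Rightarrow> cover" where
  "act g x = tmult (tmult (fst g) x) (tinv (snd g))"

text \<open>Lorentzian metric from the Killing form: on tangent vectors v (as matrices in M2(R))
  the quadratic form is -det v; the time orientation is given by the timelike field g J.\<close>
definition lq :: "mat2 \<Rightarrow> real" where "lq v = - det v"

definition lB :: "mat2 \<Rightarrow> mat2 \<Rightarrow> real" where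
  "lB u v = (lq (u + v) - lq u - lq v) / 2"

definition Jrot :: mat2 where "Jrot = mat2 0 (-1) 1 0"

definition future_causal :: "mat2 \<Rightarrow> mat2 \<Rightarrow> bool" where
  "future_causal g v \<longleftrightarrow> v \<noteq> 0 \<and> lq v \<le> 0 \<and> lB v (g ** Jrot) < 0"

definition future_causal_curve :: "(real \<Rightarrow> cover) \<Rightarrow> bool" where
  "future_causal_curve c \<longleftrightarrow>
     continuous_on {0..1} c \<and> (cov_proj \<circ> c) piecewise_C1_differentiable_on {0..1} \<and>
     (\<exists>K. finite K \<and> (\<forall>t\<in>{0<..<1} - K. \<exists>v.
         ((cov_proj \<circ> c) has_vector_derivative v) (at t) \<and> future_causal (cov_proj (c t)) v))"

definition causal_le :: "cover \<Rightarrow> cover \<Rightarrow> bool" where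
  "causal_le x y \<longleftrightarrow> x = y \<or> (\<exists>c. future_causal_curve c \<and> c 0 = x \<and> c 1 = y)"

definition causally_related :: "cover \<Rightarrow> cover \<Rightarrow> bool" where
  "causally_related x y \<longleftrightarrow> causal_le x y \<or> causal_le y x"

definition flow :: "mat2 \<Rightarrow> mat2 \<Rightarrow> real \<Rightarrow> cover \<times> cover" where
  "flow XL XR t = (texp (t *\<^sub>R XL), texp (t *\<^sub>R XR))"

definition Cset :: "cover \<times> cover \<Rightarrow> cover set" where
  "Cset g = {x. \<not> causally_related (act g x) x}"

definition killing_vec :: "mat2 \<Rightarrow> mat2 \<Rightarrow> cover \<Rightarrow> mat2" where
  "killing_vec XL XR x = vector_derivative (\<lambda>t. cov_proj (act (flow XL XR t) x)) (at 0)"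

definition Dset :: "mat2 \<Rightarrow> mat2 \<Rightarrow> cover set" where
  "Dset XL XR = {x. lq (killing_vec XL XR x) > 0}"

end

theory Submission
  imports Defs
begin

definition x1 :: "mat2 \<Rightarrow> real" where "x1 m = (m$1$1 + m$2$2)/2"
definition x2 :: "mat2 \<Rightarrow> real" where "x2 m = (m$2$1 - m$1$2)/2"
definition x3 :: "mat2 \<Rightarrow> real" where "x3 m = (m$1$1 - m$2$2)/2"
definition x4 :: "mat2 \<Rightarrow> real" where "x4 m = (m$1$2 + m$2$1)/2"

lemma mat2_nth [simp]:
  "mat2 a b c d $ 1 $ 1 = a" "mat2 a b c d $ 1 $ 2 = b"
  "mat2 a b c d $ 2 $ 1 = c" "mat2 a b c d $ 2 $ 2 = d"
  by (simp_all add: mat2_def)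

lemma mat2_eta: "m = mat2 (m$1$1) (m$1$2) (m$2$1) (m$2$2)"
  by (simp add: vec_eq_iff forall_2)

lemma mat2_eq_iff: "(m::mat2) = n \<longleftrightarrow> m$1$1 = n$1$1 \<and> m$1$2 = n$1$2 \<and> m$2$1 = n$2$1 \<and> m$2$2 = n$2$2"
  by (auto simp add: vec_eq_iff forall_2)

definition rr :: "complex \<Rightarrow> real" where "rr w = sqrt (1 + (cmod w)\<^sup>2)"

lemma rr_ge1: "rr w \<ge> 1" by (simp add: rr_def)
lemma rr_pos: "rr w > 0" using rr_ge1[of w] by linarith
lemma rr_sq: "(rr w)\<^sup>2 = 1 + (Re w)\<^sup>2 + (Im w)\<^sup>2"
  by (simp add: rr_def cmod_power2)

lemma cov_proj_nth:
  "cov_proj z $ 1 $ 1 = rr (snd z) * cos (fst z) + Re (snd z)"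
  "cov_proj z $ 1 $ 2 = Im (snd z) - rr (snd z) * sin (fst z)"
  "cov_proj z $ 2 $ 1 = Im (snd z) + rr (snd z) * sin (fst z)"
  "cov_proj z $ 2 $ 2 = rr (snd z) * cos (fst z) - Re (snd z)"
  by (simp_all add: cov_proj_def Let_def rr_def)

lemma x_cov:
  "x1 (cov_proj z) = rr (snd z) * cos (fst z)"
  "x2 (cov_proj z) = rr (snd z) * sin (fst z)"
  "x3 (cov_proj z) = Re (snd z)"
  "x4 (cov_proj z) = Im (snd z)"
  by (simp_all add: x1_def x2_def x3_def x4_def cov_proj_nth)

lemma det2: "det (m::mat2) = m$1$1 * m$2$2 - m$1$2 * m$2$1"
  by (rule det_2)

lemma det_x: "det m = (x1 m)\<^sup>2 + (x2 m)\<^sup>2 - (x3 m)\<^sup>2 - (x4 m)\<^sup>2"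
  unfolding det2 x1_def x2_def x3_def x4_def
  by (simp add: field_simps power2_eq_square)

lemma mat_from_x: "m = mat2 (x1 m + x3 m) (x4 m - x2 m) (x4 m + x2 m) (x1 m - x3 m)"
  by (simp add: mat2_eq_iff x1_def x2_def x3_def x4_def field_simps)

lemma det_cov_proj: "det (cov_proj z) = 1"
proof -
  have c: "(cos (fst z))\<^sup>2 = 1 - (sin (fst z))\<^sup>2" by (simp add: cos_squared_eq)
  show ?thesis
    by (simp add: det_x x_cov power_mult_distrib rr_sq c algebra_simps)
qed

definition SL2 :: "mat2 set" where "SL2 = {m. det m = 1}"

lemma cov_proj_SL2: "cov_proj z \<in> SL2" by (simp add: SL2_def det_cov_proj)

lemma rho_SL2: "det m = 1 \<Longrightarrow> (x1 m)\<^sup>2 + (x2 m)\<^sup>2 = 1 + (x3 m)\<^sup>2 + (x4 m)\<^sup>2"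
  by (simp add: det_x algebra_simps)

lemma x12_nonzero: "det m = 1 \<Longrightarrow> Complex (x1 m) (x2 m) \<noteq> 0"
proof
  assume "det m = 1" "Complex (x1 m) (x2 m) = 0"
  then have "x1 m = 0" "x2 m = 0" by (auto simp: complex_eq_iff)
  moreover have "1 + (x3 m)\<^sup>2 + (x4 m)\<^sup>2 > 0" by (simp add: add_pos_nonneg)
  ultimately show False using rho_SL2[OF \<open>det m = 1\<close>] by simp
qed

lemma continuous_on_x [continuous_intros]:
  assumes "continuous_on S f"
  shows "continuous_on S (\<lambda>s. x1 (f s))" "continuous_on S (\<lambda>s. x2 (f s))"
        "continuous_on S (\<lambda>s. x3 (f s))" "continuous_on S (\<lambda>s. x4 (f s))"
  unfolding x1_def x2_def x3_def x4_def
  by (auto intro!: continuous_intros assms)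

lemma continuous_on_mat2 [continuous_intros]:
  assumes "continuous_on S a" "continuous_on S b" "continuous_on S c" "continuous_on S d"
  shows "continuous_on S (\<lambda>s. mat2 (a s) (b s) (c s) (d s))"
proof -
  have "(\<lambda>s. mat2 (a s) (b s) (c s) (d s)) = (\<lambda>s. a s *\<^sub>R mat2 1 0 0 0 + b s *\<^sub>R mat2 0 1 0 0
     + c s *\<^sub>R mat2 0 0 1 0 + d s *\<^sub>R mat2 0 0 0 1)"
    by (auto simp: mat2_eq_iff)
  show ?thesis unfolding \<open>(\<lambda>s. mat2 (a s) (b s) (c s) (d s)) = _\<close>
    by (intro continuous_intros assms)
qed

lemma mat2_decomp: "mat2 a b c d = a *\<^sub>R mat2 1 0 0 0 + b *\<^sub>R mat2 0 1 0 0
     + c *\<^sub>R mat2 0 0 1 0 + d *\<^sub>R mat2 0 0 0 1"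
  by (auto simp: mat2_eq_iff)

lemma snd_from_proj: "snd z = Complex (x3 (cov_proj z)) (x4 (cov_proj z))"
  by (simp add: x_cov)

lemma rr_from_x: "det m = 1 \<Longrightarrow> rr (Complex (x3 m) (x4 m)) = sqrt ((x1 m)\<^sup>2 + (x2 m)\<^sup>2)"
  by (simp add: rr_def cmod_def rho_SL2 add.assoc)

lemma lift_exists:
  fixes S :: "'a::real_normed_vector set"
  assumes "convex S" "continuous_on S f" "\<And>s. s\<in>S \<Longrightarrow> det (f s) = 1" "s0 \<in> S" "cov_proj z0 = f s0"
  obtains l where "continuous_on S l" "l s0 = z0" "\<And>s. s\<in>S \<Longrightarrow> cov_proj (l s) = f s"
proof -
  define h where "h s = complex_of_real (x1 (f s)) + \<i> * complex_of_real (x2 (f s))" for s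
  have hc: "continuous_on S h" unfolding h_def by (intro continuous_intros assms)
  have hnz: "h s \<noteq> 0" if "s \<in> S" for s
    using x12_nonzero[OF assms(3)[OF that]] by (simp add: h_def complex_eq_iff)
  obtain g where gc: "continuous_on S g" and hg: "\<And>s. s \<in> S \<Longrightarrow> h s = exp (g s)"
    using continuous_logarithm_on_contractible[OF hc convex_imp_contractible[OF assms(1)] hnz] by blast
  have xg: "x1 (f s) = exp (Re (g s)) * cos (Im (g s))" "x2 (f s) = exp (Re (g s)) * sin (Im (g s))"
    if "s \<in> S" for s
    using hg[OF that] unfolding exp_eq_polar h_def by (auto simp: complex_eq_iff)
  have rrg: "rr (Complex (x3 (f s)) (x4 (f s))) = exp (Re (g s))" if "s \<in> S" for s
  proof -
    have "(x1 (f s))\<^sup>2 + (x2 (f s))\<^sup>2 = (exp (Re (g s)))\<^sup>2"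
    proof -
      have "(x1 (f s))\<^sup>2 + (x2 (f s))\<^sup>2 = (exp (Re (g s)))\<^sup>2 * ((cos (Im (g s)))\<^sup>2 + (sin (Im (g s)))\<^sup>2)"
        unfolding xg[OF that] by algebra
      then show ?thesis by simp
    qed
    then show ?thesis using rr_from_x[OF assms(3)[OF that]] by simp
  qed
  define \<delta> where "\<delta> = fst z0 - Im (g s0)"
  have z0snd: "snd z0 = Complex (x3 (f s0)) (x4 (f s0))"
    using snd_from_proj[of z0] assms(5) by simp
  have E0: "exp (Re (g s0)) > 0" by simp
  have c0: "cos (fst z0) = cos (Im (g s0))" and s0': "sin (fst z0) = sin (Im (g s0))"
  proof -
    have "x1 (cov_proj z0) = x1 (f s0)" "x2 (cov_proj z0) = x2 (f s0)" using assms(5) by simp_all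
    then have "exp (Re (g s0)) * cos (fst z0) = exp (Re (g s0)) * cos (Im (g s0))"
         "exp (Re (g s0)) * sin (fst z0) = exp (Re (g s0)) * sin (Im (g s0))"
      unfolding x_cov z0snd rrg[OF assms(4)] xg[OF assms(4)] by simp_all
    then show "cos (fst z0) = cos (Im (g s0))" "sin (fst z0) = sin (Im (g s0))" using E0 by simp_all
  qed
  have cd: "cos \<delta> = 1" and sd: "sin \<delta> = 0"
    unfolding \<delta>_def cos_diff sin_diff c0 s0' by (simp_all add: mult.commute)
  define l where "l s = (Im (g s) + \<delta>, Complex (x3 (f s)) (x4 (f s)))" for s
  show ?thesis
  proof
    show "continuous_on S l" unfolding l_def
      by (intro continuous_intros gc assms)
    show "l s0 = z0" unfolding l_def \<delta>_def using z0snd by (simp add: prod_eq_iff)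
    show "cov_proj (l s) = f s" if "s \<in> S" for s
    proof -
      have "x1 (cov_proj (l s)) = x1 (f s)" "x2 (cov_proj (l s)) = x2 (f s)"
           "x3 (cov_proj (l s)) = x3 (f s)" "x4 (cov_proj (l s)) = x4 (f s)"
        unfolding x_cov l_def using rrg[OF that] xg[OF that]
        by (simp_all add: cos_add sin_add cd sd)
      then show ?thesis
        by (metis mat_from_x)
    qed
  qed
qed

lemma lift_unique:
  fixes S :: "'a::topological_space set"
  assumes "connected S" "continuous_on S l1" "continuous_on S l2"
    "\<And>s. s\<in>S \<Longrightarrow> cov_proj (l1 s) = cov_proj (l2 s)" "s0 \<in> S" "l1 s0 = l2 s0" "s \<in> S"
  shows "l1 s = l2 s"
proof -
  have sn: "snd (l1 t) = snd (l2 t)" if "t \<in> S" for t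
    using snd_from_proj[of "l1 t"] snd_from_proj[of "l2 t"] assms(4)[OF that] by simp
  have "\<exists>n::int. fst (l1 t) - fst (l2 t) = n * 2 * pi" if "t \<in> S" for t
  proof -
    have "x1 (cov_proj (l1 t)) = x1 (cov_proj (l2 t))" "x2 (cov_proj (l1 t)) = x2 (cov_proj (l2 t))"
      using assms(4)[OF that] by simp_all
    then have "cos (fst (l1 t)) = cos (fst (l2 t))" "sin (fst (l1 t)) = sin (fst (l2 t))"
      unfolding x_cov sn[OF that] using rr_pos[of "snd (l2 t)"] by simp_all
    then have "cos (fst (l1 t) - fst (l2 t)) = 1"
      unfolding cos_diff by (simp flip: power2_eq_square)
    then show ?thesis using cos_one_2pi_int by blast
  qed
  then have qi: "(fst (l1 t) - fst (l2 t)) / (2 * pi) \<in> \<int>" if "t \<in> S" for t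
    using that by (metis (no_types, lifting) Ints_of_int divide_eq_eq mult.assoc pi_neq_zero mult_eq_0_iff zero_neq_numeral)
  have qc: "continuous_on S (\<lambda>t. (fst (l1 t) - fst (l2 t)) / (2 * pi))"
    by (intro continuous_intros assms) auto
  have "(\<lambda>t. (fst (l1 t) - fst (l2 t)) / (2 * pi)) constant_on S"
  proof (rule continuous_discrete_range_constant[OF assms(1) qc])
    fix x assume "x \<in> S"
    show "\<exists>e>0. \<forall>y. y \<in> S \<and> (fst (l1 y) - fst (l2 y)) / (2 * pi) \<noteq> (fst (l1 x) - fst (l2 x)) / (2 * pi) \<longrightarrow>
             e \<le> norm ((fst (l1 y) - fst (l2 y)) / (2 * pi) - (fst (l1 x) - fst (l2 x)) / (2 * pi))"
      by (rule exI[of _ 1]) (auto intro!: Ints_nonzero_abs_ge1 Ints_diff qi \<open>x \<in> S\<close>)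
  qed
  then have "(fst (l1 s) - fst (l2 s)) / (2 * pi) = (fst (l1 s0) - fst (l2 s0)) / (2 * pi)"
    using assms(5,7) unfolding constant_on_def by metis
  then have "fst (l1 s) = fst (l2 s)" using assms(6) by simp
  then show ?thesis using sn[OF assms(7)] by (simp add: prod_eq_iff)
qed

lemma lift_end_eq:
  assumes "continuous_on {0..1} l" "l 0 = x0" "\<And>s. s \<in> {0..1} \<Longrightarrow> cov_proj (l s) = c s"
  shows "lift_end x0 c = l 1"
  unfolding lift_end_def
proof (rule the_equality)
  show "\<exists>l'. continuous_on {0..1} l' \<and> l' 0 = x0 \<and> (\<forall>s\<in>{0..1}. cov_proj (l' s) = c s) \<and> l' 1 = l 1"
    using assms by blast
  fix y assume "\<exists>l'. continuous_on {0..1} l' \<and> l' 0 = x0 \<and> (\<forall>s\<in>{0..1}. cov_proj (l' s) = c s) \<and> l' 1 = y"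
  then obtain l' where l': "continuous_on {0..1} l'" "l' 0 = x0" "\<forall>s\<in>{0..1}. cov_proj (l' s) = c s" "l' 1 = y"
    by blast
  have "l' 1 = l 1"
    by (rule lift_unique[of "{0..1::real}" l' l 0]) (use l' assms in auto)
  then show "y = l 1" using l' by simp
qed

lemma continuous_on_compose_pair:
  assumes "continuous_on (UNIV \<times> {0..1::real}) l" "s \<in> {0..1}"
  shows "continuous_on UNIV (\<lambda>t::real. l (t, s))"
proof -
  have "continuous_on UNIV (\<lambda>t::real. (t, s))" by (intro continuous_intros)
  moreover have "(\<lambda>t::real. (t, s)) ` UNIV \<subseteq> UNIV \<times> {0..1}" using assms(2) by auto
  ultimately show ?thesis
    using continuous_on_compose[of UNIV "\<lambda>t::real. (t, s)" l] continuous_on_subset[OF assms(1)]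
    by (simp add: o_def)
qed

lemma continuous_on_compose_pair2:
  assumes "continuous_on (UNIV \<times> {0..1::real}) l"
  shows "continuous_on {0..1} (\<lambda>s::real. l (t::real, s))"
proof -
  have "continuous_on {0..1} (\<lambda>s::real. (t, s))" by (intro continuous_intros)
  moreover have "(\<lambda>s::real. (t, s)) ` {0..1} \<subseteq> UNIV \<times> {0..1}" by auto
  ultimately show ?thesis
    using continuous_on_compose[of "{0..1}" "\<lambda>s::real. (t, s)" l] continuous_on_subset[OF assms(1)]
    by (simp add: o_def)
qed

lemma lift_family:
  fixes H :: "real \<Rightarrow> real \<Rightarrow> mat2" and A :: "real \<Rightarrow> cover"
  assumes Hc: "continuous_on (UNIV \<times> {0..1}) (\<lambda>p. H (fst p) (snd p))"
    and Hd: "\<And>t s. s \<in> {0..1} \<Longrightarrow> det (H t s) = 1"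
    and Ac: "continuous_on UNIV A" and A0: "\<And>t. cov_proj (A t) = H t 0"
  obtains B where "continuous_on UNIV B" "\<And>t. lift_end (A t) (H t) = B t"
     "\<And>t. cov_proj (B t) = H t 1" "B 0 = lift_end (A 0) (H 0)"
proof -
  have cv: "convex (UNIV \<times> {0..1::real})" by (rule convex_Times) (simp_all add: convex_real_interval)
  obtain l where lc: "continuous_on (UNIV \<times> {0..1}) l" and l0: "l (0,0) = A 0"
    and lp: "\<And>p. p \<in> UNIV \<times> {0..1} \<Longrightarrow> cov_proj (l p) = H (fst p) (snd p)"
  proof (rule lift_exists[OF cv Hc, of "(0,0)" "A 0"])
    show "\<And>s. s \<in> UNIV \<times> {0..1} \<Longrightarrow> det (H (fst s) (snd s)) = 1" using Hd by auto
    show "(0::real, 0::real) \<in> UNIV \<times> {0..1}" by simp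
    show "cov_proj (A 0) = H (fst (0::real, 0::real)) (snd (0::real, 0::real))" using A0 by simp
  qed (auto)
  have la: "l (t, 0) = A t" for t
    by (rule lift_unique[of UNIV "\<lambda>t. l (t, 0)" A 0])
       (use lp A0 l0 continuous_on_compose_pair[OF lc, of 0] Ac in auto)
  have le: "lift_end (A t) (H t) = l (t, 1)" for t
    by (rule lift_end_eq) (use continuous_on_compose_pair2[OF lc] la lp in auto)
  show ?thesis
  proof
    show "continuous_on UNIV (\<lambda>t. l (t, 1))" using continuous_on_compose_pair[OF lc, of 1] by simp
    show "lift_end (A t) (H t) = l (t, 1)" for t by (rule le)
    show "cov_proj (l (t, 1)) = H t 1" for t using lp[of "(t,1)"] by simp
    show "l (0, 1) = lift_end (A 0) (H 0)" using le by simp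
  qed
qed

lemma lift_line:
  fixes f :: "real \<Rightarrow> mat2"
  assumes "continuous_on UNIV f" "\<And>t. det (f t) = 1" "cov_proj z0 = f 0"
  obtains l where "continuous_on UNIV l" "l 0 = z0" "\<And>t. cov_proj (l t) = f t"
  using lift_exists[OF convex_UNIV assms(1), of 0 z0] assms by auto

lemma mm_scaleR_right: "(A::mat2) ** (k *\<^sub>R B) = k *\<^sub>R (A ** B)"
  by (simp add: matrix_scalar_ac scalar_matrix_assoc)
lemma mm_scaleR_left: "(k *\<^sub>R (A::mat2)) ** B = k *\<^sub>R (A ** B)"
  by (simp add: scalar_matrix_assoc)

lemma fact_div_aux: "real (Suc n) * (x / fact (Suc n)) = x / fact n"
  by (simp add: field_simps del: of_nat_Suc)

lemma mult_nth:
  fixes A B :: mat2 shows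
  "(A ** B :: mat2) $ 1 $ 1 = A$1$1 * B$1$1 + A$1$2 * B$2$1"
  "(A ** B :: mat2) $ 1 $ 2 = A$1$1 * B$1$2 + A$1$2 * B$2$2"
  "(A ** B :: mat2) $ 2 $ 1 = A$2$1 * B$1$1 + A$2$2 * B$2$1"
  "(A ** B :: mat2) $ 2 $ 2 = A$2$1 * B$1$2 + A$2$2 * B$2$2"
  by (simp_all add: matrix_matrix_mult_def sum_2)

lemma mat1_nth [simp]:
  "(mat 1 :: mat2) $ 1 $ 1 = 1" "(mat 1 :: mat2) $ 1 $ 2 = 0"
  "(mat 1 :: mat2) $ 2 $ 1 = 0" "(mat 1 :: mat2) $ 2 $ 2 = 1"
  by (simp_all add: mat_def)

lemma trace2: "trace (m::mat2) = m$1$1 + m$2$2"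
  by (simp add: trace_def sum_2)

definition adj2 :: "mat2 \<Rightarrow> mat2" where "adj2 m = mat2 (m$2$2) (- m$1$2) (- m$2$1) (m$1$1)"

lemma matrix_inv_unique2:
  assumes "(A::mat2) ** B = mat 1" "B ** A = mat 1"
  shows "matrix_inv A = B"
  unfolding matrix_inv_def
proof (rule some_equality)
  show "A ** B = mat 1 \<and> B ** A = mat 1" using assms by simp
  fix A' assume "A ** A' = mat 1 \<and> A' ** A = mat 1"
  then have "A' = A' ** (A ** B)" "B = (A' ** A) ** B" using assms by (simp_all add: matrix_mul_rid matrix_mul_lid)
  then show "A' = B" by (simp add: matrix_mul_assoc)
qed

lemma matrix_inv_SL2: "det m = 1 \<Longrightarrow> matrix_inv m = adj2 m"
  by (rule matrix_inv_unique2) (auto simp: mat2_eq_iff mult_nth adj2_def det2 algebra_simps)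

lemma det_adj2: "det (adj2 m) = det m"
  by (simp add: adj2_def det2 mult.commute)

lemma sl2_sq:
  assumes "trace (X::mat2) = 0" shows "X ** X = (- det X) *\<^sub>R mat 1"
proof -
  have h: "X$2$2 = - X$1$1" using assms by (simp add: trace2)
  show ?thesis by (simp add: mat2_eq_iff mult_nth det2 h algebra_simps)
qed

definition ca :: "real \<Rightarrow> nat \<Rightarrow> real" where "ca d n = (if even n then d ^ (n div 2) else 0) / fact n"
definition cb :: "real \<Rightarrow> nat \<Rightarrow> real" where "cb d n = (if even n then 0 else d ^ (n div 2)) / fact n"

lemma mpow_sl2:
  assumes "trace X = 0"
  shows "mpow X n = (if even n then (- det X) ^ (n div 2) else 0) *\<^sub>R mat 1
                   + (if even n then 0 else (- det X) ^ (n div 2)) *\<^sub>R X"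
proof (induction n)
  case 0
  then show ?case by simp
next
  case (Suc n)
  have "mpow X (Suc n) = X ** mpow X n" by simp
  also have "\<dots> = (if even n then (- det X) ^ (n div 2) else 0) *\<^sub>R X
       + (if even n then 0 else (- det X) ^ (n div 2)) *\<^sub>R (X ** X)"
    unfolding Suc matrix_add_ldistrib mm_scaleR_right by (simp add: matrix_mul_rid)
  also have "\<dots> = (if even (Suc n) then (- det X) ^ (Suc n div 2) else 0) *\<^sub>R mat 1
                   + (if even (Suc n) then 0 else (- det X) ^ (Suc n div 2)) *\<^sub>R X"
    unfolding sl2_sq[OF assms]
    by (cases "even n") (auto simp: scaleR_scaleR add.commute mm_scaleR_right elim!: oddE evenE)
  finally show ?case .
qed

lemma mpow_scale: "mpow (t *\<^sub>R X) n = t ^ n *\<^sub>R mpow X n"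
  by (induction n) (simp_all add: mm_scaleR_right mm_scaleR_left scaleR_scaleR mult.commute)

lemma abs_ca_le: "\<bar>ca d n * t ^ n\<bar> \<le> inverse (fact n) * (max 1 \<bar>d\<bar> * \<bar>t\<bar>) ^ n"
  and abs_cb_le: "\<bar>cb d n * t ^ n\<bar> \<le> inverse (fact n) * (max 1 \<bar>d\<bar> * \<bar>t\<bar>) ^ n"
proof -
  have p: "\<bar>d ^ (n div 2)\<bar> \<le> max 1 \<bar>d\<bar> ^ n"
  proof -
    have "\<bar>d ^ (n div 2)\<bar> \<le> max 1 \<bar>d\<bar> ^ (n div 2)" by (simp add: power_abs power_mono)
    also have "\<dots> \<le> max 1 \<bar>d\<bar> ^ n" by (rule power_increasing) auto
    finally show ?thesis .
  qed
  have "\<bar>(if even n then d ^ (n div 2) else 0) * t ^ n\<bar> \<le> max 1 \<bar>d\<bar> ^ n * \<bar>t\<bar> ^ n"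
    using p by (auto simp: abs_mult power_abs intro: mult_right_mono)
  then show "\<bar>ca d n * t ^ n\<bar> \<le> inverse (fact n) * (max 1 \<bar>d\<bar> * \<bar>t\<bar>) ^ n"
    by (simp add: ca_def power_mult_distrib divide_inverse abs_mult mult_left_mono mult.commute mult.left_commute)
  have "\<bar>(if even n then 0 else d ^ (n div 2)) * t ^ n\<bar> \<le> max 1 \<bar>d\<bar> ^ n * \<bar>t\<bar> ^ n"
    using p by (auto simp: abs_mult power_abs intro: mult_right_mono)
  then show "\<bar>cb d n * t ^ n\<bar> \<le> inverse (fact n) * (max 1 \<bar>d\<bar> * \<bar>t\<bar>) ^ n"
    by (simp add: cb_def power_mult_distrib divide_inverse abs_mult mult_left_mono mult.commute mult.left_commute)
qed

lemma summable_ca: "summable (\<lambda>n. ca d n * t ^ n)"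
  by (rule summable_comparison_test[OF _ summable_exp[of "max 1 \<bar>d\<bar> * \<bar>t\<bar>"]])
     (use abs_ca_le in auto)

lemma summable_cb: "summable (\<lambda>n. cb d n * t ^ n)"
  by (rule summable_comparison_test[OF _ summable_exp[of "max 1 \<bar>d\<bar> * \<bar>t\<bar>"]])
     (use abs_cb_le in auto)

definition CC :: "real \<Rightarrow> real \<Rightarrow> real" where "CC d t = (\<Sum>n. ca d n * t ^ n)"
definition SS :: "real \<Rightarrow> real \<Rightarrow> real" where "SS d t = (\<Sum>n. cb d n * t ^ n)"

lemma diffs_ca: "diffs (ca d) = (\<lambda>n. d * cb d n)"
proof
  fix n
  have "diffs (ca d) n = (if even (Suc n) then d ^ (Suc n div 2) else 0) / fact n"
    unfolding diffs_def ca_def fact_div_aux by simp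
  also have "\<dots> = d * cb d n" by (cases "even n") (auto simp: cb_def elim!: oddE)
  finally show "diffs (ca d) n = d * cb d n" .
qed

lemma diffs_cb: "diffs (cb d) = ca d"
proof
  fix n
  have "diffs (cb d) n = (if even (Suc n) then 0 else d ^ (Suc n div 2)) / fact n"
    unfolding diffs_def cb_def fact_div_aux by simp
  also have "\<dots> = ca d n" by (cases "even n") (auto simp: ca_def elim!: oddE)
  finally show "diffs (cb d) n = ca d n" .
qed

lemma CC_deriv: "(CC d has_real_derivative d * SS d t) (at t)"
proof -
  have "((\<lambda>x. \<Sum>n. ca d n * x ^ n) has_real_derivative (\<Sum>n. diffs (ca d) n * t ^ n)) (at t)"
    by (rule termdiffs_strong_converges_everywhere) (rule summable_ca)
  moreover have "(\<Sum>n. diffs (ca d) n * t ^ n) = d * SS d t"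
    unfolding diffs_ca SS_def using summable_cb[of d t]
    by (simp add: suminf_mult mult.assoc)
  ultimately show ?thesis unfolding CC_def[abs_def] by simp
qed

lemma SS_deriv: "(SS d has_real_derivative CC d t) (at t)"
proof -
  have "((\<lambda>x. \<Sum>n. cb d n * x ^ n) has_real_derivative (\<Sum>n. diffs (cb d) n * t ^ n)) (at t)"
    by (rule termdiffs_strong_converges_everywhere) (rule summable_cb)
  then show ?thesis unfolding CC_def SS_def[abs_def] diffs_cb by simp
qed

lemma CC0: "CC d 0 = 1" and SS0: "SS d 0 = 0"
  unfolding CC_def SS_def using powser_zero[of "ca d"] powser_zero[of "cb d"]
  by (simp_all add: ca_def cb_def)

lemma CC_SS_det: "(CC d t)\<^sup>2 - d * (SS d t)\<^sup>2 = 1"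
proof -
  have "\<forall>x. ((\<lambda>t. (CC d t)\<^sup>2 - d * (SS d t)\<^sup>2) has_real_derivative 0) (at x)"
  proof
    fix x
    have "((\<lambda>t. (CC d t)\<^sup>2 - d * (SS d t)\<^sup>2) has_real_derivative
        (2 * CC d x * (d * SS d x) - d * (2 * SS d x * CC d x))) (at x)"
      by (auto intro!: derivative_eq_intros CC_deriv SS_deriv simp: power2_eq_square)
    then show "((\<lambda>t. (CC d t)\<^sup>2 - d * (SS d t)\<^sup>2) has_real_derivative 0) (at x)"
      by (simp add: algebra_simps)
  qed
  from DERIV_isconst_all[OF this, of t 0] show ?thesis by (simp add: CC0 SS0)
qed

lemma CC_cont [continuous_intros]: "continuous_on S f \<Longrightarrow> continuous_on S (\<lambda>x. CC d (f x))"
  and SS_cont [continuous_intros]: "continuous_on S f \<Longrightarrow> continuous_on S (\<lambda>x. SS d (f x))"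
proof -
  have "continuous_on UNIV (CC d)" "continuous_on UNIV (SS d)"
    using CC_deriv SS_deriv DERIV_isCont by (blast intro: continuous_at_imp_continuous_on)+
  then show "continuous_on S f \<Longrightarrow> continuous_on S (\<lambda>x. CC d (f x))"
       "continuous_on S f \<Longrightarrow> continuous_on S (\<lambda>x. SS d (f x))"
    by (auto intro: continuous_on_compose2)
qed

lemma mexp_sl2:
  assumes "trace X = 0"
  shows "mexp (t *\<^sub>R X) = CC (- det X) t *\<^sub>R mat 1 + SS (- det X) t *\<^sub>R X"
proof -
  define d where "d = - det X"
  have tmq: "(1 / fact n) *\<^sub>R mpow (t *\<^sub>R X) n = (ca d n * t ^ n) *\<^sub>R mat 1 + (cb d n * t ^ n) *\<^sub>R X" for n
    unfolding mpow_scale mpow_sl2[OF assms] d_def[symmetric]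
    by (simp add: ca_def cb_def scaleR_add_right scaleR_scaleR)
  have "mexp (t *\<^sub>R X) = (\<Sum>n. (ca d n * t ^ n) *\<^sub>R mat 1 + (cb d n * t ^ n) *\<^sub>R X)"
    unfolding mexp_def tmq ..
  also have "\<dots> = (\<Sum>n. (ca d n * t ^ n) *\<^sub>R mat 1) + (\<Sum>n. (cb d n * t ^ n) *\<^sub>R X)"
    by (rule suminf_add[symmetric])
       (intro summable_scaleR_left summable_ca summable_cb)+
  also have "\<dots> = CC d t *\<^sub>R mat 1 + SS d t *\<^sub>R X"
    unfolding CC_def SS_def by (simp add: suminf_scaleR_left summable_ca summable_cb)
  finally show ?thesis unfolding d_def .
qed

lemma mm_expand: "(A::mat2) ** B = mat2 (A$1$1 * B$1$1 + A$1$2 * B$2$1) (A$1$1 * B$1$2 + A$1$2 * B$2$2)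
   (A$2$1 * B$1$1 + A$2$2 * B$2$1) (A$2$1 * B$1$2 + A$2$2 * B$2$2)"
  by (simp add: mat2_eq_iff mult_nth)

lemma continuous_on_mm [continuous_intros]:
  assumes "continuous_on S f" "continuous_on S g"
  shows "continuous_on S (\<lambda>s. (f s :: mat2) ** (g s :: mat2))"
  unfolding mm_expand by (intro continuous_intros assms)

lemma continuous_on_rr [continuous_intros]:
  "continuous_on S f \<Longrightarrow> continuous_on S (\<lambda>s. rr (f s))"
  unfolding rr_def by (intro continuous_intros)

lemma continuous_on_cov_proj [continuous_intros]:
  fixes f :: "'a::t2_space \<Rightarrow> cover"
  assumes "continuous_on S f"
  shows "continuous_on S (\<lambda>s. cov_proj (f s))"
proof -
  have eq: "(\<lambda>s. cov_proj (f s)) = (\<lambda>s. mat2 (rr (snd (f s)) * cos (fst (f s)) + Re (snd (f s)))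
       (Im (snd (f s)) - rr (snd (f s)) * sin (fst (f s)))
       (Im (snd (f s)) + rr (snd (f s)) * sin (fst (f s)))
       (rr (snd (f s)) * cos (fst (f s)) - Re (snd (f s))))"
    by (rule ext) (simp add: mat2_eq_iff cov_proj_nth)
  have fc: "continuous_on S (\<lambda>x. fst (f x))" by (intro continuous_intros assms)
  have c1: "continuous_on S (\<lambda>x. cos (fst (f x)))" by (rule continuous_on_cos[OF fc])
  have c2: "continuous_on S (\<lambda>x. sin (fst (f x)))" by (rule continuous_on_sin[OF fc])
  show ?thesis unfolding eq
    by (intro continuous_intros assms c1 c2)
qed

lemma cov_proj_te: "cov_proj te = mat 1"
  by (simp add: mat2_eq_iff cov_proj_nth te_def rr_def)

lemma scaleR_te: "s *\<^sub>R te = te"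
  by (simp add: te_def)

lemma zero_scale_te: "0 *\<^sub>R (z::cover) = te"
  by (simp add: te_def zero_prod_def)

lemma lift_end_const: "lift_end z (\<lambda>s. cov_proj z) = z"
  using lift_end_eq[of "\<lambda>s. z" z "\<lambda>s. cov_proj z"] by simp

lemma lift_end_line: "lift_end te (\<lambda>s. cov_proj (s *\<^sub>R z)) = z"
proof -
  have "lift_end te (\<lambda>s. cov_proj (s *\<^sub>R z)) = (\<lambda>s. s *\<^sub>R z) 1"
    by (rule lift_end_eq) (auto simp: zero_scale_te te_def zero_prod_def intro!: continuous_intros)
  then show ?thesis by simp
qed

lemma det_CS:
  assumes "trace (X::mat2) = 0"
  shows "det (c *\<^sub>R mat 1 + s *\<^sub>R X) = c\<^sup>2 + s\<^sup>2 * det X"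
proof -
  have h: "X$2$2 = - X$1$1" using assms by (simp add: trace2)
  show ?thesis by (simp add: det2 h power2_eq_square algebra_simps)
qed

lemma adj_CS:
  assumes "trace (X::mat2) = 0"
  shows "adj2 (c *\<^sub>R mat 1 + s *\<^sub>R X) = c *\<^sub>R mat 1 - s *\<^sub>R X"
proof -
  have h: "X$2$2 = - X$1$1" using assms by (simp add: trace2)
  show ?thesis by (simp add: adj2_def mat2_eq_iff h)
qed

definition EE :: "mat2 \<Rightarrow> real \<Rightarrow> mat2" where
  "EE X t = CC (- det X) t *\<^sub>R mat 1 + SS (- det X) t *\<^sub>R X"
definition EI :: "mat2 \<Rightarrow> real \<Rightarrow> mat2" where
  "EI X t = CC (- det X) t *\<^sub>R mat 1 - SS (- det X) t *\<^sub>R X"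

lemma det_EE: "trace X = 0 \<Longrightarrow> det (EE X t) = 1"
  unfolding EE_def det_CS using CC_SS_det[of "- det X" t] by (simp add: mult.commute)

lemma EE0: "EE X 0 = mat 1"
  by (simp add: EE_def CC0 SS0)

lemma continuous_on_EE [continuous_intros]: "continuous_on S f \<Longrightarrow> continuous_on S (\<lambda>s. EE X (f s))"
  unfolding EE_def by (intro continuous_intros)

lemma continuous_on_EI [continuous_intros]: "continuous_on S f \<Longrightarrow> continuous_on S (\<lambda>s. EI X (f s))"
  unfolding EI_def by (intro continuous_intros)

lemma inv_EE: "trace X = 0 \<Longrightarrow> matrix_inv (EE X t) = EI X t"
  using matrix_inv_SL2[OF det_EE] adj_CS by (simp add: EE_def EI_def)

lemma texp_lift:
  assumes "trace X = 0"
  obtains l where "continuous_on UNIV l" "l 0 = te" "\<And>t. cov_proj (l t) = EE X t"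
    "\<And>t. texp (t *\<^sub>R X) = l t"
proof -
  obtain l where lc: "continuous_on UNIV l" and l0: "l 0 = te" and lp: "\<And>t. cov_proj (l t) = EE X t"
  proof (rule lift_line[of "EE X" te])
    show "continuous_on UNIV (EE X)" using continuous_on_EE[OF continuous_on_id] by simp
    show "det (EE X t) = 1" for t by (rule det_EE[OF assms])
    show "cov_proj te = EE X 0" by (simp add: cov_proj_te EE0)
  qed blast
  have "texp (t *\<^sub>R X) = l t" for t
  proof -
    have "lift_end te (\<lambda>s. mexp (s *\<^sub>R (t *\<^sub>R X))) = (\<lambda>s. l (s * t)) 1"
    proof (rule lift_end_eq)
      show "continuous_on {0..1} (\<lambda>s. l (s * t))"
        by (rule continuous_on_compose2[OF lc]) (auto intro: continuous_intros)
      show "cov_proj (l (s * t)) = mexp (s *\<^sub>R t *\<^sub>R X)" for s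
        using lp mexp_sl2[OF assms, of "s * t"] by (simp add: EE_def)
    qed (simp add: l0)
    then show ?thesis by (simp add: texp_def)
  qed
  then show ?thesis using that lc l0 lp by blast
qed

lemma continuous_on_fst_comp:
  "continuous_on UNIV l \<Longrightarrow> continuous_on S (\<lambda>p. l (fst p))"
  by (rule continuous_on_compose2[of UNIV l S fst]) (auto intro: continuous_intros)

lemma continuous_on_adj2 [continuous_intros]:
  "continuous_on S f \<Longrightarrow> continuous_on S (\<lambda>s. adj2 (f s))"
  unfolding adj2_def by (intro continuous_intros)

lemma cov_proj_zero [simp]: "cov_proj 0 = mat 1"
  using cov_proj_te by (simp add: te_def zero_prod_def)

lemma adj2_one: "adj2 (mat 1) = mat 1"
  by (simp add: adj2_def mat2_eq_iff)

lemma matrix_inv_one: "matrix_inv (mat 1 :: mat2) = mat 1"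
  using matrix_inv_SL2[of "mat 1"] adj2_one by (simp add: det2)

lemma orbit:
  assumes tL: "trace XL = 0" and tR: "trace XR = 0"
  obtains L where "continuous_on UNIV L" "L 0 = x" "\<And>t. act (flow XL XR t) x = L t"
    "\<And>t. cov_proj (L t) = (EE XL t ** cov_proj x) ** EI XR t"
proof -
  obtain lL where lLc: "continuous_on UNIV lL" and lL0: "lL 0 = te"
    and lLp: "\<And>t. cov_proj (lL t) = EE XL t" and lLe: "\<And>t. texp (t *\<^sub>R XL) = lL t"
    using texp_lift[OF tL] by blast
  obtain lR where lRc: "continuous_on UNIV lR" and lR0: "lR 0 = te"
    and lRp: "\<And>t. cov_proj (lR t) = EE XR t" and lRe: "\<And>t. texp (t *\<^sub>R XR) = lR t"
    using texp_lift[OF tR] by blast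
  obtain B1 where B1c: "continuous_on UNIV B1"
    and B1e: "\<And>t. lift_end (lL t) (\<lambda>s. cov_proj (lL t) ** cov_proj (s *\<^sub>R x)) = B1 t"
    and B1p: "\<And>t. cov_proj (B1 t) = cov_proj (lL t) ** cov_proj (1 *\<^sub>R x)"
    and B10: "B1 0 = lift_end (lL 0) (\<lambda>s. cov_proj (lL 0) ** cov_proj (s *\<^sub>R x))"
  proof (rule lift_family[of "\<lambda>t s. cov_proj (lL t) ** cov_proj (s *\<^sub>R x)" lL])
    show "continuous_on (UNIV \<times> {0..1}) (\<lambda>p. cov_proj (lL (fst p)) ** cov_proj (snd p *\<^sub>R x))"
      by (intro continuous_intros continuous_on_fst_comp[OF lLc])
    show "det (cov_proj (lL t) ** cov_proj (s *\<^sub>R x)) = 1" for t s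
      by (simp add: det_mul det_cov_proj)
    show "continuous_on UNIV lL" by (rule lLc)
    show "cov_proj (lL t) = cov_proj (lL t) ** cov_proj (0 *\<^sub>R x)" for t
      by (simp add: zero_scale_te cov_proj_te matrix_mul_rid)
  qed blast
  have B1x: "B1 0 = x" using B10 by (simp add: lL0 cov_proj_te matrix_mul_lid lift_end_line)
  obtain B2 where B2c: "continuous_on UNIV B2"
    and B2e: "\<And>t. lift_end te (\<lambda>s. matrix_inv (cov_proj (s *\<^sub>R lR t))) = B2 t"
    and B2p: "\<And>t. cov_proj (B2 t) = matrix_inv (cov_proj (1 *\<^sub>R lR t))"
    and B20: "B2 0 = lift_end te (\<lambda>s. matrix_inv (cov_proj (s *\<^sub>R lR 0)))"
  proof (rule lift_family[of "\<lambda>t s. matrix_inv (cov_proj (s *\<^sub>R lR t))" "\<lambda>t. te"])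
    have eq: "(\<lambda>p. matrix_inv (cov_proj (snd p *\<^sub>R lR (fst p)))) = (\<lambda>p. adj2 (cov_proj (snd p *\<^sub>R lR (fst p))))"
      by (rule ext) (simp add: matrix_inv_SL2 det_cov_proj)
    show "continuous_on (UNIV \<times> {0..1}) (\<lambda>p. matrix_inv (cov_proj (snd p *\<^sub>R lR (fst p))))"
      unfolding eq by (intro continuous_intros continuous_on_fst_comp[OF lRc])
    show "det (matrix_inv (cov_proj (s *\<^sub>R lR t))) = 1" for t s
      by (simp add: matrix_inv_SL2 det_cov_proj det_adj2)
    show "continuous_on UNIV (\<lambda>t. te)" by simp
    show "cov_proj te = matrix_inv (cov_proj (0 *\<^sub>R lR t))" for t
      by (simp add: zero_scale_te cov_proj_te matrix_inv_one)
  qed blast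
  have B2x: "B2 0 = te" using B20 lift_end_const[of te]
    by (simp add: lR0 scaleR_te cov_proj_te matrix_inv_one)
  have B2p': "cov_proj (B2 t) = EI XR t" for t
    using B2p[of t] by (simp add: lRp inv_EE[OF tR])
  obtain B3 where B3c: "continuous_on UNIV B3"
    and B3e: "\<And>t. lift_end (B1 t) (\<lambda>s. cov_proj (B1 t) ** cov_proj (s *\<^sub>R B2 t)) = B3 t"
    and B3p: "\<And>t. cov_proj (B3 t) = cov_proj (B1 t) ** cov_proj (1 *\<^sub>R B2 t)"
    and B30: "B3 0 = lift_end (B1 0) (\<lambda>s. cov_proj (B1 0) ** cov_proj (s *\<^sub>R B2 0))"
  proof (rule lift_family[of "\<lambda>t s. cov_proj (B1 t) ** cov_proj (s *\<^sub>R B2 t)" B1])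
    show "continuous_on (UNIV \<times> {0..1}) (\<lambda>p. cov_proj (B1 (fst p)) ** cov_proj (snd p *\<^sub>R B2 (fst p)))"
      by (intro continuous_intros continuous_on_fst_comp[OF B1c] continuous_on_fst_comp[OF B2c])
    show "det (cov_proj (B1 t) ** cov_proj (s *\<^sub>R B2 t)) = 1" for t s
      by (simp add: det_mul det_cov_proj)
    show "continuous_on UNIV B1" by (rule B1c)
    show "cov_proj (B1 t) = cov_proj (B1 t) ** cov_proj (0 *\<^sub>R B2 t)" for t
      by (simp add: zero_scale_te cov_proj_te matrix_mul_rid)
  qed blast
  have B3x: "B3 0 = x" using B30 lift_end_const[of x]
    by (simp add: B1x B2x scaleR_te cov_proj_te matrix_mul_rid)
  show ?thesis
  proof
    show "continuous_on UNIV B3" by (rule B3c)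
    show "B3 0 = x" by (rule B3x)
    show "act (flow XL XR t) x = B3 t" for t
    proof -
      have "tmult (texp (t *\<^sub>R XL)) x = B1 t" using B1e[of t] by (simp add: tmult_def lLe)
      moreover have "tinv (texp (t *\<^sub>R XR)) = B2 t" using B2e[of t] by (simp add: tinv_def lRe)
      ultimately show ?thesis using B3e[of t] by (simp add: act_def flow_def tmult_def)
    qed
    show "cov_proj (B3 t) = (EE XL t ** cov_proj x) ** EI XR t" for t
      using B3p[of t] B1p[of t] B2p' by (simp add: lLp)
  qed
qed

lemma mm_add_left: fixes A B C :: mat2 shows "(A + B) ** C = A ** C + B ** C"
  by (simp add: mat2_eq_iff mult_nth algebra_simps)
lemma mm_add_right: fixes A B C :: mat2 shows "A ** (B + C) = A ** B + A ** C"
  by (simp add: mat2_eq_iff mult_nth algebra_simps)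
lemma mm_diff_left: fixes A B C :: mat2 shows "(A - B) ** C = A ** C - B ** C"
  by (simp add: mat2_eq_iff mult_nth algebra_simps)
lemma mm_diff_right: fixes A B C :: mat2 shows "A ** (B - C) = A ** B - A ** C"
  by (simp add: mat2_eq_iff mult_nth algebra_simps)
lemma mm_neg_left: fixes A B C :: mat2 shows "(- A) ** C = - (A ** C)"
  by (simp add: mat2_eq_iff mult_nth algebra_simps)
lemma mm_neg_right: fixes A B C :: mat2 shows "A ** (- C) = - (A ** C)"
  by (simp add: mat2_eq_iff mult_nth algebra_simps)
lemma mm_zero_right [simp]: fixes A B C :: mat2 shows "A ** 0 = 0"
  by (simp add: mat2_eq_iff mult_nth)

lemma bb_mm: "bounded_bilinear (\<lambda>(A::mat2) (B::mat2). A ** B)"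
proof -
  have "bilinear (\<lambda>(A::mat2) (B::mat2). A ** B)"
    unfolding bilinear_def linear_iff
    by (simp add: mm_add_right mm_add_left mm_scaleR_right mm_scaleR_left)
  then show ?thesis using bilinear_conv_bounded_bilinear by blast
qed

lemma has_vector_derivative_mm:
  assumes "(f has_vector_derivative f') (at t)" "(g has_vector_derivative g') (at t)"
  shows "((\<lambda>t. (f t :: mat2) ** (g t :: mat2)) has_vector_derivative (f t ** g' + f' ** g t)) (at t)"
  using bounded_bilinear.has_vector_derivative[OF bb_mm assms] .

lemma EE_comm: "trace X = 0 \<Longrightarrow> X ** EE X t = EE X t ** X"
  by (simp add: EE_def mm_add_right mm_add_left mm_scaleR_right mm_scaleR_left
      matrix_mul_rid matrix_mul_lid)

lemma EI_comm: "trace X = 0 \<Longrightarrow> X ** EI X t = EI X t ** X"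
  by (simp add: EI_def mm_diff_right mm_diff_left mm_scaleR_right mm_scaleR_left
      matrix_mul_rid matrix_mul_lid)

lemma EE_deriv:
  assumes "trace X = 0"
  shows "(EE X has_vector_derivative (X ** EE X t)) (at t)"
proof -
  have "(EE X has_vector_derivative ((- det X * SS (- det X) t) *\<^sub>R mat 1 + CC (- det X) t *\<^sub>R X)) (at t)"
    unfolding EE_def[abs_def]
    by (intro has_vector_derivative_add has_vector_derivative_scaleR[of _ _ _ _ "\<lambda>_. _" 0, simplified]
        CC_deriv SS_deriv has_vector_derivative_const)
  moreover have "(- det X * SS (- det X) t) *\<^sub>R mat 1 + CC (- det X) t *\<^sub>R X = X ** EE X t"
    by (simp add: EE_def matrix_add_ldistrib mm_scaleR_right matrix_mul_rid sl2_sq[OF assms] add.commute)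
  ultimately show ?thesis by simp
qed

lemma EI_deriv:
  assumes "trace X = 0"
  shows "(EI X has_vector_derivative (- (EI X t ** X))) (at t)"
proof -
  have "(EI X has_vector_derivative ((- det X * SS (- det X) t) *\<^sub>R mat 1 - CC (- det X) t *\<^sub>R X)) (at t)"
    unfolding EI_def[abs_def]
    by (intro has_vector_derivative_diff has_vector_derivative_scaleR[of _ _ _ _ "\<lambda>_. _" 0, simplified]
        CC_deriv SS_deriv has_vector_derivative_const)
  moreover have "(- det X * SS (- det X) t) *\<^sub>R mat 1 - CC (- det X) t *\<^sub>R X = - (EI X t ** X)"
    by (simp add: EI_def mm_diff_left mm_scaleR_left matrix_mul_lid sl2_sq[OF assms])
  ultimately show ?thesis by simp
qed

definition MM :: "mat2 \<Rightarrow> mat2 \<Rightarrow> mat2 \<Rightarrow> real \<Rightarrow> mat2" where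
  "MM XL XR g t = (EE XL t ** g) ** EI XR t"

definition KV :: "mat2 \<Rightarrow> mat2 \<Rightarrow> mat2 \<Rightarrow> mat2" where
  "KV XL XR g = XL ** g - g ** XR"

lemma MM0: "MM XL XR g 0 = g"
  by (simp add: MM_def EE0 EI_def CC0 SS0 matrix_mul_lid matrix_mul_rid)

lemma MM_deriv:
  assumes "trace XL = 0" "trace XR = 0"
  shows "(MM XL XR g has_vector_derivative KV XL XR (MM XL XR g t)) (at t)"
proof -
  have "(MM XL XR g has_vector_derivative
     ((EE XL t ** g) ** (- (EI XR t ** XR)) + (EE XL t ** 0 + (XL ** EE XL t) ** g) ** EI XR t)) (at t)"
    unfolding MM_def[abs_def]
    by (intro has_vector_derivative_mm EE_deriv EI_deriv assms has_vector_derivative_const)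
  moreover have "(EE XL t ** g) ** (- (EI XR t ** XR)) + (EE XL t ** 0 + (XL ** EE XL t) ** g) ** EI XR t
      = KV XL XR (MM XL XR g t)"
    by (simp add: KV_def MM_def matrix_mul_assoc mm_neg_right)
  ultimately show ?thesis by simp
qed

definition rho :: "mat2 \<Rightarrow> real" where "rho m = sqrt ((x1 m)\<^sup>2 + (x2 m)\<^sup>2)"

definition PP :: "mat2 \<Rightarrow> real \<times> complex" where
  "PP m = (1 / rho m, Complex (x3 m / rho m) (x4 m / rho m))"

definition Bv :: "mat2 \<Rightarrow> mat2 \<Rightarrow> real" where "Bv m v = x1 m * x1 v + x2 m * x2 v"

definition DP :: "mat2 \<Rightarrow> mat2 \<Rightarrow> real \<times> complex" where
  "DP m v = (- Bv m v / rho m ^ 3,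
     Complex (x3 v / rho m - Bv m v * x3 m / rho m ^ 3) (x4 v / rho m - Bv m v * x4 m / rho m ^ 3))"

definition Ttau :: "mat2 \<Rightarrow> mat2 \<Rightarrow> real" where
  "Ttau m v = (x1 m * x2 v - x2 m * x1 v) / (rho m)\<^sup>2"

lemma norm_pc_sq: "(norm (a::real, z::complex))\<^sup>2 = a\<^sup>2 + (Re z)\<^sup>2 + (Im z)\<^sup>2"
  by (simp add: norm_Pair cmod_power2 add.assoc)

lemma alg_DP:
  fixes y1 y2 y3 y4 v1 v2 v3 v4 r :: real
  assumes r: "r > 0" "r\<^sup>2 = y1\<^sup>2 + y2\<^sup>2" and d: "y1\<^sup>2 + y2\<^sup>2 = 1 + y3\<^sup>2 + y4\<^sup>2"
    and tg: "y1 * v1 + y2 * v2 = y3 * v3 + y4 * v4"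
  shows "(- (y1 * v1 + y2 * v2) / r ^ 3)\<^sup>2 + (v3 / r - (y1 * v1 + y2 * v2) * y3 / r ^ 3)\<^sup>2
           + (v4 / r - (y1 * v1 + y2 * v2) * y4 / r ^ 3)\<^sup>2
         = (r\<^sup>2 * (v3\<^sup>2 + v4\<^sup>2) - (y1 * v1 + y2 * v2)\<^sup>2) / r ^ 4"
proof -
  define B where "B = y1 * v1 + y2 * v2"
  have tg': "B = y3 * v3 + y4 * v4" using tg by (simp add: B_def)
  have r2: "r\<^sup>2 = 1 + y3\<^sup>2 + y4\<^sup>2" using r d by simp
  have e3: "v3 / r - B * y3 / r ^ 3 = (r\<^sup>2 * v3 - B * y3) / r ^ 3"
    using r(1) by (simp add: field_simps power2_eq_square power3_eq_cube)
  have e4: "v4 / r - B * y4 / r ^ 3 = (r\<^sup>2 * v4 - B * y4) / r ^ 3"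
    using r(1) by (simp add: field_simps power2_eq_square power3_eq_cube)
  have r6: "(r ^ 3)\<^sup>2 = r ^ 6" by (simp flip: power_mult)
  have "(- B / r ^ 3)\<^sup>2 + (v3 / r - B * y3 / r ^ 3)\<^sup>2 + (v4 / r - B * y4 / r ^ 3)\<^sup>2
      = (B\<^sup>2 + (r\<^sup>2 * v3 - B * y3)\<^sup>2 + (r\<^sup>2 * v4 - B * y4)\<^sup>2) / r ^ 6"
    unfolding e3 e4 power_divide r6 by (simp add: add_divide_distrib)
  also have "B\<^sup>2 + (r\<^sup>2 * v3 - B * y3)\<^sup>2 + (r\<^sup>2 * v4 - B * y4)\<^sup>2
      = r\<^sup>2 * (r\<^sup>2 * (v3\<^sup>2 + v4\<^sup>2) - B\<^sup>2)"
  proof -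
    have "B\<^sup>2 + (r\<^sup>2 * v3 - B * y3)\<^sup>2 + (r\<^sup>2 * v4 - B * y4)\<^sup>2
       = B\<^sup>2 * (1 + y3\<^sup>2 + y4\<^sup>2) + r\<^sup>2 * r\<^sup>2 * (v3\<^sup>2 + v4\<^sup>2) - 2 * r\<^sup>2 * B * (y3 * v3 + y4 * v4)"
      by (simp add: power2_eq_square algebra_simps)
    also have "\<dots> = r\<^sup>2 * (r\<^sup>2 * (v3\<^sup>2 + v4\<^sup>2) - B\<^sup>2)"
      unfolding r2[symmetric] tg'[symmetric] by (simp add: power2_eq_square algebra_simps)
    finally show ?thesis .
  qed
  also have "r\<^sup>2 * (r\<^sup>2 * (v3\<^sup>2 + v4\<^sup>2) - B\<^sup>2) / r ^ 6 = (r\<^sup>2 * (v3\<^sup>2 + v4\<^sup>2) - B\<^sup>2) / r ^ 4"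
  proof -
    have "r ^ 6 = r\<^sup>2 * r ^ 4" by (simp flip: power_add)
    moreover have nz: "r\<^sup>2 \<noteq> 0" using r(1) by simp
    ultimately show ?thesis by (simp only: mult_divide_mult_cancel_left[OF nz])
  qed
  finally show ?thesis unfolding B_def .
qed

lemma alg_T:
  fixes y1 y2 v1 v2 r :: real
  assumes r: "r > 0" "r\<^sup>2 = y1\<^sup>2 + y2\<^sup>2"
  shows "((y1 * v2 - y2 * v1) / r\<^sup>2)\<^sup>2 = (r\<^sup>2 * (v1\<^sup>2 + v2\<^sup>2) - (y1 * v1 + y2 * v2)\<^sup>2) / r ^ 4"
proof -
  have "(y1 * v2 - y2 * v1)\<^sup>2 = r\<^sup>2 * (v1\<^sup>2 + v2\<^sup>2) - (y1 * v1 + y2 * v2)\<^sup>2"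
    unfolding r(2) by (simp add: power2_eq_square algebra_simps)
  moreover have "((y1 * v2 - y2 * v1) / r\<^sup>2)\<^sup>2 = (y1 * v2 - y2 * v1)\<^sup>2 / r ^ 4"
    by (simp add: power_divide flip: power_mult)
  ultimately show ?thesis by simp
qed

lemma x_add: "x1 (a + b) = x1 a + x1 b" "x2 (a + b) = x2 a + x2 b" "x3 (a + b) = x3 a + x3 b" "x4 (a + b) = x4 a + x4 b"
  by (simp_all add: x1_def x2_def x3_def x4_def field_simps)

lemma det_x_lin: "det (v::mat2) = (x1 v)\<^sup>2 + (x2 v)\<^sup>2 - (x3 v)\<^sup>2 - (x4 v)\<^sup>2"
  by (rule det_x)

lemma x_mJ: "x1 (m ** Jrot) = - x2 m" "x2 (m ** Jrot) = x1 m" "x3 (m ** Jrot) = x4 m" "x4 (m ** Jrot) = - x3 m"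
  by (simp_all add: Jrot_def mult_nth x1_def x2_def x3_def x4_def field_simps)

lemma lB_mJ: "lB v (m ** Jrot) = x2 m * x1 v - x1 m * x2 v + x4 m * x3 v - x3 m * x4 v"
  unfolding lB_def lq_def det_x x_add x_mJ by (simp add: power2_eq_square field_simps)

lemma rho_pos: "det m = 1 \<Longrightarrow> rho m > 0"
  using x12_nonzero[of m] by (auto simp: rho_def complex_eq_iff add_pos_nonneg sum_power2_gt_zero_iff)

lemma rho_sq: "(rho m)\<^sup>2 = (x1 m)\<^sup>2 + (x2 m)\<^sup>2"
  by (simp add: rho_def)

lemma norm_DP_sq:
  assumes "det m = 1" "Bv m v = x3 m * x3 v + x4 m * x4 v"
  shows "(norm (DP m v))\<^sup>2 = ((rho m)\<^sup>2 * ((x3 v)\<^sup>2 + (x4 v)\<^sup>2) - (Bv m v)\<^sup>2) / rho m ^ 4"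
  unfolding norm_pc_sq DP_def Bv_def
  using alg_DP[OF rho_pos[OF assms(1)] rho_sq rho_SL2[OF assms(1)]] assms(2)
  by (simp add: Bv_def)

lemma Ttau_sq:
  assumes "det m = 1"
  shows "(Ttau m v)\<^sup>2 = ((rho m)\<^sup>2 * ((x1 v)\<^sup>2 + (x2 v)\<^sup>2) - (Bv m v)\<^sup>2) / rho m ^ 4"
  unfolding Ttau_def Bv_def using alg_T[OF rho_pos[OF assms(1)] rho_sq] .

lemma future_bound:
  assumes d: "det m = 1" and tg: "Bv m v = x3 m * x3 v + x4 m * x4 v" and fc: "future_causal m v"
  shows "norm (DP m v) \<le> Ttau m v"
proof -
  have r: "rho m > 0" using rho_pos[OF d] .
  have lq: "(x3 v)\<^sup>2 + (x4 v)\<^sup>2 \<le> (x1 v)\<^sup>2 + (x2 v)\<^sup>2"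
    using fc unfolding future_causal_def lq_def det_x by simp
  have lb: "x2 m * x1 v - x1 m * x2 v + x4 m * x3 v - x3 m * x4 v < 0"
    using fc unfolding future_causal_def lB_mJ by simp
  define A where "A = x1 m * x2 v - x2 m * x1 v"
  define C where "C = x4 m * x3 v - x3 m * x4 v"
  have lagA: "A\<^sup>2 + (Bv m v)\<^sup>2 = (rho m)\<^sup>2 * ((x1 v)\<^sup>2 + (x2 v)\<^sup>2)"
    unfolding A_def Bv_def rho_sq by (simp add: power2_eq_square algebra_simps)
  have lagC: "C\<^sup>2 + (Bv m v)\<^sup>2 = ((x3 m)\<^sup>2 + (x4 m)\<^sup>2) * ((x3 v)\<^sup>2 + (x4 v)\<^sup>2)"
    unfolding C_def tg by (simp add: power2_eq_square algebra_simps)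
  have w: "(x3 m)\<^sup>2 + (x4 m)\<^sup>2 = (rho m)\<^sup>2 - 1" using rho_SL2[OF d] rho_sq[of m] by simp
  have "C\<^sup>2 \<le> A\<^sup>2"
  proof -
    have "C\<^sup>2 = ((rho m)\<^sup>2 - 1) * ((x3 v)\<^sup>2 + (x4 v)\<^sup>2) - (Bv m v)\<^sup>2" using lagC w by simp
    also have "\<dots> \<le> ((rho m)\<^sup>2 - 1) * ((x1 v)\<^sup>2 + (x2 v)\<^sup>2) - (Bv m v)\<^sup>2"
    proof -
      have "(rho m)\<^sup>2 - 1 \<ge> 0" using w by (metis add_nonneg_nonneg zero_le_power2)
      then show ?thesis using lq by (simp add: mult_left_mono)
    qed
    also have "\<dots> = A\<^sup>2 - ((x1 v)\<^sup>2 + (x2 v)\<^sup>2)" using lagA by (simp add: algebra_simps)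
    also have "\<dots> \<le> A\<^sup>2" by simp
    finally show ?thesis .
  qed
  have "C < A" using lb unfolding A_def C_def by simp
  have A0: "A \<ge> 0"
  proof (rule ccontr)
    assume "\<not> A \<ge> 0"
    then have "C < 0" "A < 0" using \<open>C < A\<close> by auto
    then have "A\<^sup>2 < C\<^sup>2" using \<open>C < A\<close>
      by (metis abs_of_neg abs_less_iff power2_less_eq_zero_iff less_le_not_le neg_less_iff_less power2_abs abs_le_square_iff not_le)
    then show False using \<open>C\<^sup>2 \<le> A\<^sup>2\<close> by simp
  qed
  have T0: "Ttau m v \<ge> 0" unfolding Ttau_def using A0 by (simp add: A_def)
  have "(norm (DP m v))\<^sup>2 \<le> (Ttau m v)\<^sup>2"
    unfolding norm_DP_sq[OF d tg] Ttau_sq[OF d]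
    using lq r by (intro divide_right_mono) (auto intro: mult_left_mono)
  then show ?thesis using T0 by (meson norm_ge_zero power2_le_imp_le)
qed

lemma spacelike_bound:
  assumes d: "det m = 1" and tg: "Bv m v = x3 m * x3 v + x4 m * x4 v" and sp: "lq v > 0"
  shows "\<bar>Ttau m v\<bar> < norm (DP m v)"
proof -
  have r: "rho m > 0" using rho_pos[OF d] .
  have lq: "(x1 v)\<^sup>2 + (x2 v)\<^sup>2 < (x3 v)\<^sup>2 + (x4 v)\<^sup>2"
    using sp unfolding lq_def det_x by simp
  have "(Ttau m v)\<^sup>2 < (norm (DP m v))\<^sup>2"
    unfolding norm_DP_sq[OF d tg] Ttau_sq[OF d]
    using lq r by (intro divide_strict_right_mono) auto
  then show ?thesis by (metis abs_ge_zero norm_ge_zero power2_abs power_less_imp_less_base)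
qed

lemma x_scale: "x1 (c *\<^sub>R a) = c * x1 a" "x2 (c *\<^sub>R a) = c * x2 a" "x3 (c *\<^sub>R a) = c * x3 a" "x4 (c *\<^sub>R a) = c * x4 a"
  by (simp_all add: x1_def x2_def x3_def x4_def field_simps)

lemma bl_x: "bounded_linear x1" "bounded_linear x2" "bounded_linear x3" "bounded_linear x4"
  by (simp_all add: linear_conv_bounded_linear[symmetric] linear_iff x_add x_scale)

lemma x_deriv:
  assumes "(f has_vector_derivative v) (at t)"
  shows "((\<lambda>u. x1 (f u)) has_real_derivative x1 v) (at t)"
        "((\<lambda>u. x2 (f u)) has_real_derivative x2 v) (at t)"
        "((\<lambda>u. x3 (f u)) has_real_derivative x3 v) (at t)"
        "((\<lambda>u. x4 (f u)) has_real_derivative x4 v) (at t)"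
  using bounded_linear.has_vector_derivative[OF bl_x(1) assms]
    bounded_linear.has_vector_derivative[OF bl_x(2) assms]
    bounded_linear.has_vector_derivative[OF bl_x(3) assms]
    bounded_linear.has_vector_derivative[OF bl_x(4) assms]
  by (simp_all add: has_real_derivative_iff_has_vector_derivative)

lemma tangency:
  assumes "(f has_vector_derivative v) (at t)" "\<And>u. det (f u) = 1"
  shows "Bv (f t) v = x3 (f t) * x3 v + x4 (f t) * x4 v"
proof -
  note xd = x_deriv[OF assms(1)]
  have "((\<lambda>u. (x1 (f u))\<^sup>2 + (x2 (f u))\<^sup>2 - (x3 (f u))\<^sup>2 - (x4 (f u))\<^sup>2) has_real_derivative
     2 * x1 (f t) * x1 v + 2 * x2 (f t) * x2 v - 2 * x3 (f t) * x3 v - 2 * x4 (f t) * x4 v) (at t)"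
    by (auto intro!: derivative_eq_intros xd)
  moreover have "(\<lambda>u. (x1 (f u))\<^sup>2 + (x2 (f u))\<^sup>2 - (x3 (f u))\<^sup>2 - (x4 (f u))\<^sup>2) = (\<lambda>u. 1)"
    using assms(2) by (simp add: det_x)
  ultimately have "((\<lambda>u. 1::real) has_real_derivative
     2 * x1 (f t) * x1 v + 2 * x2 (f t) * x2 v - 2 * x3 (f t) * x3 v - 2 * x4 (f t) * x4 v) (at t)"
    by simp
  then have "2 * x1 (f t) * x1 v + 2 * x2 (f t) * x2 v - 2 * x3 (f t) * x3 v - 2 * x4 (f t) * x4 v = 0"
    using DERIV_const DERIV_unique by blast
  then show ?thesis unfolding Bv_def by simp
qed

lemma inv_half: "inverse (S::real) / 2 * (2 * a + 2 * b) = (a + b) / S"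
proof -
  have "2 * a + 2 * b = 2 * (a + b)" by (simp only: distrib_left)
  then show ?thesis by (simp only: divide_inverse mult.commute mult.left_commute) simp
qed

lemma rho_deriv:
  assumes "(f has_vector_derivative v) (at t)" "det (f t) = 1"
  shows "((\<lambda>u. rho (f u)) has_real_derivative Bv (f t) v / rho (f t)) (at t)"
proof -
  note xd = x_deriv[OF assms(1)]
  have pos: "(x1 (f t))\<^sup>2 + (x2 (f t))\<^sup>2 > 0" using rho_pos[OF assms(2)] by (simp add: rho_def)
  have "((\<lambda>u. sqrt ((x1 (f u))\<^sup>2 + (x2 (f u))\<^sup>2)) has_real_derivative
      inverse (sqrt ((x1 (f t))\<^sup>2 + (x2 (f t))\<^sup>2)) / 2 * (2 * (x1 (f t) * x1 v) + 2 * (x2 (f t) * x2 v))) (at t)"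
    by (rule DERIV_chain2[where g="\<lambda>u. (x1 (f u))\<^sup>2 + (x2 (f u))\<^sup>2", OF DERIV_real_sqrt[OF pos]])
       (auto intro!: derivative_eq_intros xd)
  moreover have "inverse (sqrt ((x1 (f t))\<^sup>2 + (x2 (f t))\<^sup>2)) / 2 * (2 * (x1 (f t) * x1 v) + 2 * (x2 (f t) * x2 v))
     = Bv (f t) v / rho (f t)"
    unfolding Bv_def rho_def by (rule inv_half)
  ultimately show ?thesis unfolding rho_def[abs_def] by simp
qed

lemma complex_deriv:
  assumes "(a has_real_derivative a') (at t)" "(b has_real_derivative b') (at t)"
  shows "((\<lambda>u. Complex (a u) (b u)) has_vector_derivative Complex a' b') (at t)"
proof -
  have e: "(\<lambda>u. Complex (a u) (b u)) = (\<lambda>u. a u *\<^sub>R 1 + b u *\<^sub>R \<i>)"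
    by (rule ext) (simp add: complex_eq_iff)
  have "((\<lambda>u. a u *\<^sub>R (1::complex) + b u *\<^sub>R \<i>) has_vector_derivative (a' *\<^sub>R 1 + b' *\<^sub>R \<i>)) (at t)"
    using has_vector_derivative_scaleR[OF assms(1) has_vector_derivative_const[of "1::complex"]]
      has_vector_derivative_scaleR[OF assms(2) has_vector_derivative_const[of "\<i>"]]
    by (auto intro: has_vector_derivative_add)
  moreover have "a' *\<^sub>R 1 + b' *\<^sub>R \<i> = Complex a' b'" by (simp add: complex_eq_iff)
  ultimately show ?thesis unfolding e by simp
qed

lemma PP_deriv:
  assumes "(f has_vector_derivative v) (at t)" "det (f t) = 1"
  shows "((\<lambda>u. PP (f u)) has_vector_derivative DP (f t) v) (at t)"
proof -
  note xd = x_deriv[OF assms(1)]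
  note rd = rho_deriv[OF assms]
  have r: "rho (f t) > 0" using rho_pos[OF assms(2)] .
  have d1: "((\<lambda>u. 1 / rho (f u)) has_real_derivative - Bv (f t) v / rho (f t) ^ 3) (at t)"
    using r by (auto intro!: derivative_eq_intros rd simp: power2_eq_square power3_eq_cube field_simps)
  have d3: "((\<lambda>u. x3 (f u) / rho (f u)) has_real_derivative
        x3 v / rho (f t) - Bv (f t) v * x3 (f t) / rho (f t) ^ 3) (at t)"
    using r by (auto intro!: derivative_eq_intros rd xd simp: power2_eq_square power3_eq_cube field_simps)
  have d4: "((\<lambda>u. x4 (f u) / rho (f u)) has_real_derivative
        x4 v / rho (f t) - Bv (f t) v * x4 (f t) / rho (f t) ^ 3) (at t)"
    using r by (auto intro!: derivative_eq_intros rd xd simp: power2_eq_square power3_eq_cube field_simps)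
  show ?thesis
    unfolding PP_def[abs_def] DP_def
    by (intro has_vector_derivative_Pair complex_deriv d3 d4 d1[unfolded has_real_derivative_iff_has_vector_derivative])
qed

lemma rho_cov: "rho (cov_proj z) = rr (snd z)"
proof -
  have "(x1 (cov_proj z))\<^sup>2 + (x2 (cov_proj z))\<^sup>2 = (rr (snd z))\<^sup>2 * ((cos (fst z))\<^sup>2 + (sin (fst z))\<^sup>2)"
    unfolding x_cov power_mult_distrib by (simp only: distrib_left)
  then show ?thesis using rr_pos[of "snd z"] by (simp add: rho_def)
qed

lemma tau_deriv:
  assumes ct: "continuous (at t) (\<lambda>u. fst (c u))"
    and dv: "((\<lambda>u. cov_proj (c u)) has_vector_derivative v) (at t)"
  shows "((\<lambda>u. fst (c u)) has_real_derivative Ttau (cov_proj (c t)) v) (at t)"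
proof -
  define m0 where "m0 = cov_proj (c t)"
  define \<tau>0 where "\<tau>0 = fst (c t)"
  define r0 where "r0 = rho m0"
  have d0: "det m0 = 1" unfolding m0_def by (rule det_cov_proj)
  have r0: "r0 > 0" unfolding r0_def by (rule rho_pos[OF d0])
  define N where "N u = x1 m0 * x2 (cov_proj (c u)) - x2 m0 * x1 (cov_proj (c u))" for u
  define D where "D u = r0 * rho (cov_proj (c u))" for u
  define q where "q u = N u / D u" for u
  have Nd: "(N has_real_derivative (x1 m0 * x2 v - x2 m0 * x1 v)) (at t)"
    unfolding N_def[abs_def] by (auto intro!: derivative_eq_intros x_deriv[OF dv])
  have Dd: "(D has_real_derivative (r0 * (Bv m0 v / r0))) (at t)"
    unfolding D_def[abs_def] r0_def m0_def
    by (intro DERIV_cmult rho_deriv[OF dv] det_cov_proj)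
  have Nt: "N t = 0" unfolding N_def m0_def by simp
  have Dt: "D t = r0 * r0" unfolding D_def r0_def m0_def by simp
  have qd: "(q has_real_derivative Ttau m0 v) (at t)"
  proof -
    have "(q has_real_derivative ((x1 m0 * x2 v - x2 m0 * x1 v) * D t - N t * (r0 * (Bv m0 v / r0))) / (D t * D t)) (at t)"
      unfolding q_def[abs_def] by (rule DERIV_divide[OF Nd Dd]) (use Dt r0 in simp)
    moreover have "((x1 m0 * x2 v - x2 m0 * x1 v) * D t - N t * (r0 * (Bv m0 v / r0))) / (D t * D t) = Ttau m0 v"
      unfolding Nt Dt Ttau_def r0_def[symmetric] using r0 by (simp add: power2_eq_square)
    ultimately show ?thesis by simp
  qed
  have qt: "q t = 0" unfolding q_def Nt by simp
  have gd: "((\<lambda>u. \<tau>0 + arcsin (q u)) has_real_derivative Ttau m0 v) (at t)"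
  proof -
    have "((\<lambda>u. arcsin (q u)) has_real_derivative inverse (sqrt (1 - (q t)\<^sup>2)) * Ttau m0 v) (at t)"
      by (rule DERIV_chain2[OF DERIV_arcsin qd]) (simp_all add: qt)
    then have "((\<lambda>u. arcsin (q u)) has_real_derivative Ttau m0 v) (at t)" by (simp add: qt)
    from DERIV_add[OF DERIV_const[of \<tau>0] this] show ?thesis by simp
  qed
  obtain d where d: "d > 0" and dd: "\<And>u. dist u t < d \<Longrightarrow> dist (fst (c u)) \<tau>0 < pi / 2"
    using ct unfolding continuous_at_eps_delta \<tau>0_def by (meson pi_half_gt_zero)
  have eq: "\<tau>0 + arcsin (q u) = fst (c u)" if "dist u t < d" for u
  proof -
    have b: "\<bar>fst (c u) - \<tau>0\<bar> < pi / 2" using dd[OF that] by (simp add: dist_real_def)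
    have b2: "fst (c u) - \<tau>0 < pi / 2 \<and> - (fst (c u) - \<tau>0) < pi / 2" using b by (simp only: abs_less_iff)
    have "q u = sin (fst (c u) - \<tau>0)"
    proof -
      have ru: "rr (snd (c u)) > 0" by (rule rr_pos)
      have m0e: "x1 m0 = r0 * cos \<tau>0" "x2 m0 = r0 * sin \<tau>0"
        unfolding m0_def r0_def \<tau>0_def rho_cov by (simp_all add: x_cov)
      have "q u = (r0 * rr (snd (c u)) * (cos \<tau>0 * sin (fst (c u)) - sin \<tau>0 * cos (fst (c u))))
                 / (r0 * rr (snd (c u)))"
        unfolding q_def N_def D_def m0e rho_cov x_cov by (simp add: algebra_simps)
      also have "\<dots> = cos \<tau>0 * sin (fst (c u)) - sin \<tau>0 * cos (fst (c u))"
        using r0 ru by simp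
      finally show ?thesis by (simp add: sin_diff mult.commute)
    qed
    moreover have "arcsin (sin (fst (c u) - \<tau>0)) = fst (c u) - \<tau>0"
      by (rule arcsin_sin) (use b2 in linarith)+
    ultimately have "arcsin (q u) = fst (c u) - \<tau>0" by simp
    then show ?thesis by simp
  qed
  have "((\<lambda>u. fst (c u)) has_real_derivative Ttau m0 v) (at t within UNIV)"
    by (rule has_field_derivative_transform_within[OF gd d]) (auto intro: eq)
  then show ?thesis unfolding m0_def by simp
qed

lemma bound_finite_aux:
  fixes f :: "real \<Rightarrow> 'a::real_normed_vector" and \<phi> :: "real \<Rightarrow> real"
  assumes K: "finite K"
    and fc: "continuous_on {0..1} f" and pc: "continuous_on {0..1} \<phi>"
    and dv: "\<And>x. 0 < x \<Longrightarrow> x < 1 \<Longrightarrow> x \<notin> K \<Longrightarrow>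
       \<exists>f' p'. (f has_vector_derivative f') (at x) \<and> (\<phi> has_real_derivative p') (at x) \<and> norm f' \<le> p'"
  shows "card (K \<inter> {a<..<b}) = n \<Longrightarrow> 0 \<le> a \<Longrightarrow> a \<le> b \<Longrightarrow> b \<le> 1 \<Longrightarrow> norm (f b - f a) \<le> \<phi> b - \<phi> a"
proof (induction n arbitrary: a b rule: less_induct)
  case (less n)
  show ?case
  proof (cases "K \<inter> {a<..<b} = {}")
    case True
    show ?thesis
    proof (cases "a = b")
      case True then show ?thesis by simp
    next
      case False
      then have ab: "a < b" using less.prems by simp
      have ex: "\<forall>x\<in>{a<..<b}. \<exists>f' p'. (f has_vector_derivative f') (at x) \<and> (\<phi> has_real_derivative p') (at x) \<and> norm f' \<le> p'"
      proof
        fix x assume x: "x \<in> {a<..<b}"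
        then have "x \<notin> K" using True by blast
        moreover have "0 < x" "x < 1" using x less.prems by auto
        ultimately show "\<exists>f' p'. (f has_vector_derivative f') (at x) \<and> (\<phi> has_real_derivative p') (at x) \<and> norm f' \<le> p'"
          using dv by blast
      qed
      then obtain F P where FP: "\<And>x. x \<in> {a<..<b} \<Longrightarrow> (f has_vector_derivative F x) (at x) \<and> (\<phi> has_real_derivative P x) (at x) \<and> norm (F x) \<le> P x"
        by metis
      show ?thesis
      proof (rule differentiable_bound_general[OF ab])
        show "continuous_on {a..b} f" using fc less.prems by (auto intro: continuous_on_subset)
        show "continuous_on {a..b} \<phi>" using pc less.prems by (auto intro: continuous_on_subset)
        show "(f has_vector_derivative F x) (at x)" if "a < x" "x < b" for x using FP that by auto
        show "(\<phi> has_vector_derivative P x) (at x)" if "a < x" "x < b" for x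
          using FP that by (auto simp: has_real_derivative_iff_has_vector_derivative)
        show "norm (F x) \<le> P x" if "a < x" "x < b" for x using FP that by auto
      qed
    qed
  next
    case False
    then obtain k where k: "k \<in> K" "a < k" "k < b" by auto
    have fin: "finite (K \<inter> {a<..<b})" using K by simp
    have c1: "card (K \<inter> {a<..<k}) < n"
    proof -
      have "K \<inter> {a<..<k} \<subset> K \<inter> {a<..<b}" using k by auto
      then show ?thesis using psubset_card_mono[OF fin] less.prems by simp
    qed
    have c2: "card (K \<inter> {k<..<b}) < n"
    proof -
      have "K \<inter> {k<..<b} \<subset> K \<inter> {a<..<b}" using k by auto
      then show ?thesis using psubset_card_mono[OF fin] less.prems by simp
    qed
    have "norm (f k - f a) \<le> \<phi> k - \<phi> a" using less.IH[OF c1 refl] less.prems k by simp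
    moreover have "norm (f b - f k) \<le> \<phi> b - \<phi> k" using less.IH[OF c2 refl] less.prems k by simp
    moreover have "norm (f b - f a) \<le> norm (f b - f k) + norm (f k - f a)"
      by (metis diff_add_cancel norm_triangle_ineq add_diff_eq)
    ultimately show ?thesis by simp
  qed
qed

lemma bound_finite:
  fixes f :: "real \<Rightarrow> 'a::real_normed_vector" and \<phi> :: "real \<Rightarrow> real"
  assumes "finite K" "continuous_on {0..1} f" "continuous_on {0..1} \<phi>"
    "\<And>x. 0 < x \<Longrightarrow> x < 1 \<Longrightarrow> x \<notin> K \<Longrightarrow>
       \<exists>f' p'. (f has_vector_derivative f') (at x) \<and> (\<phi> has_real_derivative p') (at x) \<and> norm f' \<le> p'"
  shows "norm (f 1 - f 0) \<le> \<phi> 1 - \<phi> 0"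
  using bound_finite_aux[OF assms, of 0 1] by simp

lemma PP_cov: "PP (cov_proj z) = (1 / rr (snd z), Complex (Re (snd z) / rr (snd z)) (Im (snd z) / rr (snd z)))"
  by (simp add: PP_def rho_cov x_cov)

lemma continuous_on_PP_cov [continuous_intros]:
  fixes c :: "'a::t2_space \<Rightarrow> cover"
  assumes "continuous_on S c"
  shows "continuous_on S (\<lambda>u. PP (cov_proj (c u)))"
proof -
  have nz: "\<forall>x\<in>S. rr (snd (c x)) \<noteq> 0" using rr_pos by (metis less_irrefl)
  show ?thesis unfolding PP_cov
    by (intro continuous_intros assms nz)
qed

lemma causal_curve_bound:
  assumes "future_causal_curve c"
  shows "norm (PP (cov_proj (c 1)) - PP (cov_proj (c 0))) \<le> fst (c 1) - fst (c 0)"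
proof -
  obtain K where K: "finite K" and KK: "\<And>t. t \<in> {0<..<1} - K \<Longrightarrow> \<exists>v.
         ((cov_proj \<circ> c) has_vector_derivative v) (at t) \<and> future_causal (cov_proj (c t)) v"
    using assms unfolding future_causal_curve_def by blast
  have cc: "continuous_on {0..1} c" using assms unfolding future_causal_curve_def by blast
  show ?thesis
  proof (rule bound_finite[OF K])
    show "continuous_on {0..1} (\<lambda>u. PP (cov_proj (c u)))" by (intro continuous_intros cc)
    show "continuous_on {0..1} (\<lambda>u. fst (c u))" by (intro continuous_intros cc)
    fix x :: real assume x: "0 < x" "x < 1" "x \<notin> K"
    then obtain v where v: "((\<lambda>u. cov_proj (c u)) has_vector_derivative v) (at x)"
      and fcv: "future_causal (cov_proj (c x)) v"
      using KK[of x] by (auto simp: o_def)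
    have ct: "continuous (at x) (\<lambda>u. fst (c u))"
    proof -
      have "isCont c x" using continuous_on_interior[OF cc] x by simp
      then show ?thesis by (intro continuous_intros)
    qed
    have tg: "Bv (cov_proj (c x)) v = x3 (cov_proj (c x)) * x3 v + x4 (cov_proj (c x)) * x4 v"
      by (rule tangency[OF v]) (rule det_cov_proj)
    show "\<exists>f' p'. ((\<lambda>u. PP (cov_proj (c u))) has_vector_derivative f') (at x) \<and>
               ((\<lambda>u. fst (c u)) has_real_derivative p') (at x) \<and> norm f' \<le> p'"
      using PP_deriv[OF v det_cov_proj] tau_deriv[OF ct v] future_bound[OF det_cov_proj tg fcv]
      by blast
  qed
qed

lemma not_causally_related:
  assumes "\<bar>fst y - fst x\<bar> < norm (PP (cov_proj y) - PP (cov_proj x))"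
  shows "\<not> causally_related y x"
proof
  assume "causally_related y x"
  then have "causal_le y x \<or> causal_le x y" unfolding causally_related_def .
  then show False
  proof
    assume "causal_le y x"
    then have "y = x \<or> (\<exists>c. future_causal_curve c \<and> c 0 = y \<and> c 1 = x)" unfolding causal_le_def .
    then show False
    proof
      assume "y = x" then show False using assms by simp
    next
      assume "\<exists>c. future_causal_curve c \<and> c 0 = y \<and> c 1 = x"
      then obtain c where "future_causal_curve c" "c 0 = y" "c 1 = x" by blast
      then have "norm (PP (cov_proj x) - PP (cov_proj y)) \<le> fst x - fst y"
        using causal_curve_bound by blast
      then show False using assms by (simp add: norm_minus_commute)
    qed
  next
    assume "causal_le x y"
    then have "x = y \<or> (\<exists>c. future_causal_curve c \<and> c 0 = x \<and> c 1 = y)" unfolding causal_le_def .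
    then show False
    proof
      assume "x = y" then show False using assms by simp
    next
      assume "\<exists>c. future_causal_curve c \<and> c 0 = x \<and> c 1 = y"
      then obtain c where "future_causal_curve c" "c 0 = x" "c 1 = y" by blast
      then have "norm (PP (cov_proj y) - PP (cov_proj x)) \<le> fst y - fst x"
        using causal_curve_bound by blast
      then show False using assms by simp
    qed
  qed
qed

lemma diff_quot:
  fixes F :: "real \<Rightarrow> 'a::real_normed_vector"
  assumes "(F has_vector_derivative D) (at 0)"
  shows "((\<lambda>h. (1 / h) *\<^sub>R (F h - F 0)) \<longlongrightarrow> D) (at 0)"
proof -
  have "((\<lambda>y. norm ((F y - F 0) - (y - 0) *\<^sub>R D) / norm (y - 0)) \<longlongrightarrow> 0) (at 0)"
    using assms unfolding has_vector_derivative_def has_derivative_iff_norm by blast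
  then have "((\<lambda>y. norm ((1 / y) *\<^sub>R (F y - F 0) - D)) \<longlongrightarrow> 0) (at 0)"
  proof (rule Lim_transform_eventually)
    show "\<forall>\<^sub>F y in at 0. norm ((F y - F 0) - (y - 0) *\<^sub>R D) / norm (y - 0) = norm ((1 / y) *\<^sub>R (F y - F 0) - D)"
      unfolding eventually_at_filter
    proof (rule always_eventually, intro allI impI)
      fix y :: real assume "y \<noteq> 0"
      then have "(1 / y) *\<^sub>R (F y - F 0) - D = (1 / y) *\<^sub>R ((F y - F 0) - y *\<^sub>R D)"
        by (simp add: scaleR_diff_right)
      then show "norm ((F y - F 0) - (y - 0) *\<^sub>R D) / norm (y - 0) = norm ((1 / y) *\<^sub>R (F y - F 0) - D)"
        by (simp add: divide_inverse mult.commute)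
    qed
  qed
  then show ?thesis using tendsto_norm_zero_iff[of "\<lambda>y. (1 / y) *\<^sub>R (F y - F 0) - D"] 
    by (simp add: LIM_zero_iff)
qed

lemma seq_at0: "filterlim (\<lambda>n::nat. 1 / real (Suc n)) (at (0::real)) sequentially"
proof (rule filterlim_atI)
  show "filterlim (\<lambda>n::nat. 1 / real (Suc n)) (nhds 0) sequentially"
    using LIMSEQ_inverse_real_of_nat by (simp add: divide_inverse)
  show "\<forall>\<^sub>F n in sequentially. 1 / real (Suc n) \<noteq> 0" by simp
qed

lemma eventually_strict:
  fixes F :: "real \<Rightarrow> 'a::real_normed_vector" and \<phi> :: "real \<Rightarrow> real"
  assumes "(F has_vector_derivative D) (at 0)" "(\<phi> has_real_derivative T) (at 0)" "\<bar>T\<bar> < norm D"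
  shows "\<exists>n::nat. n \<ge> 1 \<and> \<bar>\<phi> (1 / real n) - \<phi> 0\<bar> < norm (F (1 / real n) - F 0)"
proof -
  have qF: "((\<lambda>n. (1 / (1 / real (Suc n))) *\<^sub>R (F (1 / real (Suc n)) - F 0)) \<longlongrightarrow> D) sequentially"
    using filterlim_compose[OF diff_quot[OF assms(1)] seq_at0] by (simp only: o_def)
  have qT: "((\<lambda>h. (1 / h) *\<^sub>R (\<phi> h - \<phi> 0)) \<longlongrightarrow> T) (at 0)"
    by (rule diff_quot) (use assms(2) in \<open>simp add: has_real_derivative_iff_has_vector_derivative\<close>)
  have qP: "((\<lambda>n. (1 / (1 / real (Suc n))) *\<^sub>R (\<phi> (1 / real (Suc n)) - \<phi> 0)) \<longlongrightarrow> T) sequentially"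
    using filterlim_compose[OF qT seq_at0] by (simp only: o_def)
  have "((\<lambda>n. norm ((1 / (1 / real (Suc n))) *\<^sub>R (F (1 / real (Suc n)) - F 0))
          - norm ((1 / (1 / real (Suc n))) *\<^sub>R (\<phi> (1 / real (Suc n)) - \<phi> 0))) \<longlongrightarrow> norm D - norm T) sequentially"
    by (intro tendsto_intros qF qP)
  moreover have "norm D - norm T > 0" using assms(3) by simp
  ultimately have "\<forall>\<^sub>F n in sequentially. norm ((1 / (1 / real (Suc n))) *\<^sub>R (F (1 / real (Suc n)) - F 0))
          - norm ((1 / (1 / real (Suc n))) *\<^sub>R (\<phi> (1 / real (Suc n)) - \<phi> 0)) > 0"
    by (rule order_tendstoD)
  then obtain n where "norm ((1 / (1 / real (Suc n))) *\<^sub>R (F (1 / real (Suc n)) - F 0))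
          - norm ((1 / (1 / real (Suc n))) *\<^sub>R (\<phi> (1 / real (Suc n)) - \<phi> 0)) > 0"
    by (meson eventually_sequentially order.refl)
  then have "\<bar>real (Suc n) * (\<phi> (1 / real (Suc n)) - \<phi> 0)\<bar> < real (Suc n) * norm (F (1 / real (Suc n)) - F 0)"
    by simp
  then have "real (Suc n) * \<bar>\<phi> (1 / real (Suc n)) - \<phi> 0\<bar> < real (Suc n) * norm (F (1 / real (Suc n)) - F 0)"
    by (simp only: abs_mult abs_of_nat)
  then have "\<bar>\<phi> (1 / real (Suc n)) - \<phi> 0\<bar> < norm (F (1 / real (Suc n)) - F 0)"
    by (metis mult_less_cancel_left_pos of_nat_0_less_iff zero_less_Suc)
  then show ?thesis by (intro exI[of _ "Suc n"]) simp
qed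

lemma KV_MM:
  assumes "trace XL = 0" "trace XR = 0"
  shows "KV XL XR (MM XL XR g t) = (EE XL t ** KV XL XR g) ** EI XR t"
proof -
  have "KV XL XR (MM XL XR g t) = ((XL ** EE XL t) ** g) ** EI XR t - (EE XL t ** g) ** (EI XR t ** XR)"
    by (simp add: KV_def MM_def matrix_mul_assoc)
  also have "\<dots> = ((EE XL t ** XL) ** g) ** EI XR t - (EE XL t ** g) ** (XR ** EI XR t)"
    using EE_comm[OF assms(1)] EI_comm[OF assms(2)] by simp
  also have "\<dots> = (EE XL t ** KV XL XR g) ** EI XR t"
    by (simp add: KV_def mm_diff_left mm_diff_right matrix_mul_assoc)
  finally show ?thesis .
qed

lemma det_EI: "trace X = 0 \<Longrightarrow> det (EI X t) = 1"
  using inv_EE[of X t] matrix_inv_SL2[OF det_EE] det_adj2 det_EE by metis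

lemma lq_KV_MM:
  assumes "trace XL = 0" "trace XR = 0"
  shows "lq (KV XL XR (MM XL XR g t)) = lq (KV XL XR g)"
  unfolding KV_MM[OF assms] lq_def det_mul det_EE[OF assms(1)] det_EI[OF assms(2)] by simp

lemma EE_EI:
  assumes "trace X = 0" shows "EE X t ** EI X t = mat 1"
proof -
  have h: "X$2$2 = - X$1$1" using assms by (simp add: trace2)
  have d: "(CC (- det X) t)\<^sup>2 - (- det X) * (SS (- det X) t)\<^sup>2 = 1" by (rule CC_SS_det)
  then have d': "(CC (- det X) t)\<^sup>2 = 1 + (X$1$1 * X$1$1 + X$1$2 * X$2$1) * (SS (- det X) t)\<^sup>2"
    by (simp add: det2 h algebra_simps)
  show ?thesis
    by (simp add: mat2_eq_iff mult_nth EE_def EI_def h algebra_simps power2_eq_square)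
       (use d' in \<open>simp add: power2_eq_square algebra_simps\<close>)
qed

lemma MM_det: "det (MM XL XR (cov_proj x) t) = 1" if "trace XL = 0" "trace XR = 0"
  using that by (simp add: MM_def det_mul det_EE det_EI det_cov_proj)

lemma orbit_MM:
  assumes "trace XL = 0" "trace XR = 0"
  obtains L where "continuous_on UNIV L" "L 0 = x" "\<And>t. act (flow XL XR t) x = L t"
    "\<And>t. cov_proj (L t) = MM XL XR (cov_proj x) t"
  using orbit[OF assms, of x] unfolding MM_def[symmetric] by metis

lemma killing_vec_eq:
  assumes "trace XL = 0" "trace XR = 0"
  shows "killing_vec XL XR x = KV XL XR (cov_proj x)"
proof -
  obtain L where "\<And>t. act (flow XL XR t) x = L t" "\<And>t. cov_proj (L t) = MM XL XR (cov_proj x) t"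
    using orbit_MM[OF assms] by blast
  then have "(\<lambda>t. cov_proj (act (flow XL XR t) x)) = MM XL XR (cov_proj x)" by auto
  then show ?thesis unfolding killing_vec_def
    using vector_derivative_at[OF MM_deriv[OF assms, of "cov_proj x" 0]] by (simp add: MM0)
qed

lemma D_sub:
  assumes tL: "trace XL = 0" and tR: "trace XR = 0" and xD: "x \<in> Dset XL XR"
  shows "\<exists>n\<in>{1::nat..}. x \<in> Cset (flow XL XR (1 / real n))"
proof -
  define g where "g = cov_proj x"
  define v0 where "v0 = KV XL XR g"
  have sp: "lq v0 > 0" using xD killing_vec_eq[OF tL tR, of x] by (simp add: Dset_def v0_def g_def)
  obtain L where Lc: "continuous_on UNIV L" and L0: "L 0 = x" and La: "\<And>t. act (flow XL XR t) x = L t"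
    and Lp: "\<And>t. cov_proj (L t) = MM XL XR g t"
    using orbit_MM[OF tL tR, of x] unfolding g_def by blast
  have Lp': "(\<lambda>u. cov_proj (L u)) = MM XL XR g" using Lp by auto
  have dM: "((\<lambda>u. cov_proj (L u)) has_vector_derivative v0) (at 0)"
    unfolding Lp' v0_def using MM_deriv[OF tL tR, of g 0] by (simp add: MM0)
  have dg: "det g = 1" unfolding g_def by (rule det_cov_proj)
  have g0: "cov_proj (L 0) = g" using Lp[of 0] by (simp add: MM0)
  have dP: "((\<lambda>u. PP (cov_proj (L u))) has_vector_derivative DP g v0) (at 0)"
    using PP_deriv[OF dM] g0 dg by simp
  have ct: "continuous (at 0) (\<lambda>u. fst (L u))"
  proof -
    have "isCont L 0" using Lc by (simp add: continuous_on_eq_continuous_at)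
    then show ?thesis by (intro continuous_intros)
  qed
  have dT: "((\<lambda>u. fst (L u)) has_real_derivative Ttau g v0) (at 0)"
    using tau_deriv[OF ct dM] g0 by simp
  have tg: "Bv g v0 = x3 g * x3 v0 + x4 g * x4 v0"
    using tangency[OF dM] g0 det_cov_proj by metis
  have "\<bar>Ttau g v0\<bar> < norm (DP g v0)" by (rule spacelike_bound[OF dg tg sp])
  from eventually_strict[OF dP dT this] obtain n :: nat where n: "n \<ge> 1"
    and ineq: "\<bar>fst (L (1 / real n)) - fst (L 0)\<bar> < norm (PP (cov_proj (L (1 / real n))) - PP (cov_proj (L 0)))"
    by blast
  have "\<not> causally_related (L (1 / real n)) x"
    by (rule not_causally_related) (use ineq L0 in simp)
  then have "x \<in> Cset (flow XL XR (1 / real n))" unfolding Cset_def using La[of "1 / real n"] by simp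
  then show ?thesis using n by auto
qed

lemma EI_EE:
  assumes "trace X = 0" shows "EI X t ** EE X t = mat 1"
proof -
  have h: "X$2$2 = - X$1$1" using assms by (simp add: trace2)
  have d: "(CC (- det X) t)\<^sup>2 - (- det X) * (SS (- det X) t)\<^sup>2 = 1" by (rule CC_SS_det)
  then have d': "(CC (- det X) t)\<^sup>2 = 1 + (X$1$1 * X$1$1 + X$1$2 * X$2$1) * (SS (- det X) t)\<^sup>2"
    by (simp add: det2 h algebra_simps)
  show ?thesis
    by (simp add: mat2_eq_iff mult_nth EE_def EI_def h algebra_simps power2_eq_square)
       (use d' in \<open>simp add: power2_eq_square algebra_simps\<close>)
qed

lemma KV_MM_nonzero:
  assumes "trace XL = 0" "trace XR = 0" "KV XL XR g \<noteq> 0"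
  shows "KV XL XR (MM XL XR g t) \<noteq> 0"
proof
  assume "KV XL XR (MM XL XR g t) = 0"
  then have "(EE XL t ** KV XL XR g) ** EI XR t = 0" using KV_MM[OF assms(1,2)] by simp
  then have z: "EI XL t ** ((EE XL t ** KV XL XR g) ** EI XR t) ** EE XR t = 0"
    by (simp add: mat2_eq_iff mult_nth)
  have "EI XL t ** ((EE XL t ** KV XL XR g) ** EI XR t) ** EE XR t
      = ((EI XL t ** EE XL t) ** KV XL XR g) ** (EI XR t ** EE XR t)"
    by (simp add: matrix_mul_assoc)
  also have "\<dots> = KV XL XR g"
    by (simp add: EI_EE[OF assms(1)] EI_EE[OF assms(2)] matrix_mul_lid matrix_mul_rid)
  finally have "KV XL XR g = 0" using z by simp
  then show False using assms(3) by simp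
qed

lemma lq_scale: "lq (b *\<^sub>R v) = b\<^sup>2 * lq v"
  by (simp add: lq_def det_x x_scale power_mult_distrib algebra_simps)

lemma lB_scale: "lB (b *\<^sub>R v) (m ** Jrot) = b * lB v (m ** Jrot)"
  by (simp add: lB_mJ x_scale algebra_simps)

lemma causal_lB_nonzero:
  assumes d: "det m = 1" and tg: "Bv m v = x3 m * x3 v + x4 m * x4 v" and nz: "v \<noteq> 0" and c: "lq v \<le> 0"
  shows "lB v (m ** Jrot) \<noteq> 0"
proof
  assume lb0: "lB v (m ** Jrot) = 0"
  have lq: "(x3 v)\<^sup>2 + (x4 v)\<^sup>2 \<le> (x1 v)\<^sup>2 + (x2 v)\<^sup>2"
    using c unfolding lq_def det_x by simp
  define A where "A = x1 m * x2 v - x2 m * x1 v"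
  define C where "C = x4 m * x3 v - x3 m * x4 v"
  have lagA: "A\<^sup>2 + (Bv m v)\<^sup>2 = (rho m)\<^sup>2 * ((x1 v)\<^sup>2 + (x2 v)\<^sup>2)"
    unfolding A_def Bv_def rho_sq by (simp add: power2_eq_square algebra_simps)
  have lagC: "C\<^sup>2 + (Bv m v)\<^sup>2 = ((x3 m)\<^sup>2 + (x4 m)\<^sup>2) * ((x3 v)\<^sup>2 + (x4 v)\<^sup>2)"
    unfolding C_def tg by (simp add: power2_eq_square algebra_simps)
  have w: "(x3 m)\<^sup>2 + (x4 m)\<^sup>2 = (rho m)\<^sup>2 - 1" using rho_SL2[OF d] rho_sq[of m] by simp
  have "C\<^sup>2 \<le> A\<^sup>2 - ((x1 v)\<^sup>2 + (x2 v)\<^sup>2)"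
  proof -
    have "C\<^sup>2 = ((rho m)\<^sup>2 - 1) * ((x3 v)\<^sup>2 + (x4 v)\<^sup>2) - (Bv m v)\<^sup>2" using lagC w by simp
    also have "\<dots> \<le> ((rho m)\<^sup>2 - 1) * ((x1 v)\<^sup>2 + (x2 v)\<^sup>2) - (Bv m v)\<^sup>2"
    proof -
      have "(rho m)\<^sup>2 - 1 \<ge> 0" using w by (metis add_nonneg_nonneg zero_le_power2)
      then show ?thesis using lq by (simp add: mult_left_mono)
    qed
    also have "\<dots> = A\<^sup>2 - ((x1 v)\<^sup>2 + (x2 v)\<^sup>2)" using lagA by (simp add: algebra_simps)
    finally show ?thesis .
  qed
  moreover have "C = A" using lb0 unfolding lB_mJ A_def C_def by simp
  ultimately have "(x1 v)\<^sup>2 + (x2 v)\<^sup>2 \<le> 0" by simp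
  then have v12: "x1 v = 0" "x2 v = 0" by (simp_all add: sum_power2_le_zero_iff)
  then have "(x3 v)\<^sup>2 + (x4 v)\<^sup>2 \<le> 0" using lq by simp
  then have v34: "x3 v = 0" "x4 v = 0" by (simp_all add: sum_power2_le_zero_iff)
  have "v = 0" using mat_from_x[of v] v12 v34 by (simp add: mat2_eq_iff)
  then show False using nz by simp
qed

lemma continuous_on_det2 [continuous_intros]:
  "continuous_on S f \<Longrightarrow> continuous_on S (\<lambda>s. det (f s :: mat2))"
  unfolding det2 by (intro continuous_intros)

lemma continuous_on_MM [continuous_intros]:
  "continuous_on S f \<Longrightarrow> continuous_on S (\<lambda>s. MM XL XR g (f s))"
  unfolding MM_def by (intro continuous_intros)

lemma continuous_on_KV [continuous_intros]:
  "continuous_on S f \<Longrightarrow> continuous_on S (\<lambda>s. KV XL XR (f s))"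
  unfolding KV_def by (intro continuous_intros)

lemma continuous_on_lB [continuous_intros]:
  "continuous_on S f \<Longrightarrow> continuous_on S h \<Longrightarrow> continuous_on S (\<lambda>s. lB (f s) (h s))"
  unfolding lB_def lq_def by (auto intro!: continuous_intros)

lemma Jrot_cont [continuous_intros]:
  "continuous_on S f \<Longrightarrow> continuous_on S (\<lambda>s. (f s :: mat2) ** Jrot)"
  by (intro continuous_intros)

lemma orbit_curve:
  assumes tL: "trace XL = 0" and tR: "trace XR = 0"
    and Lc: "continuous_on UNIV L" and Lp: "\<And>t. cov_proj (L t) = MM XL XR (cov_proj x) t"
    and b: "b \<noteq> 0" and nz: "KV XL XR (cov_proj x) \<noteq> 0" and c: "lq (KV XL XR (cov_proj x)) \<le> 0"
    and sg: "\<And>s. s \<in> {0..1} \<Longrightarrow>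
       b * lB (KV XL XR (MM XL XR (cov_proj x) (a + b * s))) (MM XL XR (cov_proj x) (a + b * s) ** Jrot) < 0"
  shows "future_causal_curve (\<lambda>s. L (a + b * s))"
proof -
  define M where "M = MM XL XR (cov_proj x)"
  have cov: "cov_proj \<circ> (\<lambda>s. L (a + b * s)) = (\<lambda>s. M (a + b * s))"
    by (rule ext) (simp add: Lp M_def)
  have der: "((\<lambda>s. M (a + b * s)) has_vector_derivative (b *\<^sub>R KV XL XR (M (a + b * s)))) (at s)" for s
  proof -
    have l: "((\<lambda>s. a + b * s) has_vector_derivative b) (at s)"
      unfolding has_real_derivative_iff_has_vector_derivative[symmetric]
      by (auto intro!: derivative_eq_intros)
    have "(M has_vector_derivative KV XL XR (M (a + b * s))) (at (a + b * s))"
      unfolding M_def by (rule MM_deriv[OF tL tR])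
    from vector_diff_chain_at[OF l this] show ?thesis by (simp add: o_def)
  qed
  have Mc: "continuous_on S (\<lambda>s. M (a + b * s))" for S
    unfolding M_def by (intro continuous_intros)
  show ?thesis
    unfolding future_causal_curve_def
  proof (intro conjI)
    show "continuous_on {0..1} (\<lambda>s. L (a + b * s))"
      by (rule continuous_on_compose2[OF Lc]) (auto intro!: continuous_intros)
    show "(cov_proj \<circ> (\<lambda>s. L (a + b * s))) piecewise_C1_differentiable_on {0..1}"
      unfolding cov
    proof (rule C1_differentiable_imp_piecewise)
      show "(\<lambda>s. M (a + b * s)) C1_differentiable_on {0..1}"
        unfolding C1_differentiable_on_def
        by (rule exI[of _ "\<lambda>s. b *\<^sub>R KV XL XR (M (a + b * s))"])
           (use der in \<open>auto simp: M_def intro!: continuous_intros\<close>)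
    qed
    show "\<exists>K. finite K \<and> (\<forall>t\<in>{0<..<(1::real)} - K. \<exists>v. ((cov_proj \<circ> (\<lambda>s. L (a + b * s))) has_vector_derivative v) (at t) \<and>
              future_causal (cov_proj ((\<lambda>s. L (a + b * s)) t)) v)"
    proof (intro exI[of _ "{}"] conjI ballI)
      fix t :: real assume t: "t \<in> {0<..<1} - {}"
      show "\<exists>v. ((cov_proj \<circ> (\<lambda>s. L (a + b * s))) has_vector_derivative v) (at t) \<and>
              future_causal (cov_proj ((\<lambda>s. L (a + b * s)) t)) v"
      proof (intro exI conjI)
        show "((cov_proj \<circ> (\<lambda>s. L (a + b * s))) has_vector_derivative b *\<^sub>R KV XL XR (M (a + b * t))) (at t)"
          unfolding cov by (rule der)
        show "future_causal (cov_proj ((\<lambda>s. L (a + b * s)) t)) (b *\<^sub>R KV XL XR (M (a + b * t)))"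
          unfolding future_causal_def
        proof (intro conjI)
          show "b *\<^sub>R KV XL XR (M (a + b * t)) \<noteq> 0"
            using b KV_MM_nonzero[OF tL tR nz] by (simp add: M_def)
          show "lq (b *\<^sub>R KV XL XR (M (a + b * t))) \<le> 0"
            using c unfolding lq_scale M_def lq_KV_MM[OF tL tR] by (simp add: mult_nonneg_nonpos)
          show "lB (b *\<^sub>R KV XL XR (M (a + b * t))) (cov_proj (L (a + b * t)) ** Jrot) < 0"
            unfolding Lp M_def[symmetric] lB_scale using sg[of t] t by (simp add: M_def)
        qed
      qed
    qed simp
  qed
qed

lemma C_sub:
  assumes tL: "trace XL = 0" and tR: "trace XR = 0" and n: "n \<ge> 1"
    and xC: "x \<in> Cset (flow XL XR (1 / real n))"
  shows "x \<in> Dset XL XR"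
proof (rule ccontr)
  assume "x \<notin> Dset XL XR"
  then have c: "lq (KV XL XR (cov_proj x)) \<le> 0"
    using killing_vec_eq[OF tL tR, of x] by (simp add: Dset_def)
  define h where "h = 1 / real n"
  have h: "h > 0" using n by (simp add: h_def)
  define M where "M = MM XL XR (cov_proj x)"
  obtain L where Lc: "continuous_on UNIV L" and L0: "L 0 = x" and La: "\<And>t. act (flow XL XR t) x = L t"
    and Lp: "\<And>t. cov_proj (L t) = MM XL XR (cov_proj x) t"
    using orbit_MM[OF tL tR, of x] by blast
  have "causally_related (L h) x"
  proof (cases "KV XL XR (cov_proj x) = 0")
    case True
    have "\<exists>k. \<forall>t\<in>UNIV. M t = k"
    proof (rule has_derivative_zero_constant[OF convex_UNIV])
      fix t :: real
      have "(M has_vector_derivative 0) (at t)"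
        using MM_deriv[OF tL tR, of "cov_proj x" t] KV_MM[OF tL tR, of "cov_proj x" t] True
        by (simp add: M_def)
      then show "(M has_derivative (\<lambda>h. 0)) (at t within UNIV)"
        by (simp add: has_vector_derivative_def)
    qed
    then have Mc: "M t = cov_proj x" for t using MM0[of XL XR "cov_proj x"] by (metis M_def UNIV_I)
    have "L h = x"
      by (rule lift_unique[of UNIV L "\<lambda>t. x" 0]) (use Lc L0 Lp Mc in \<open>auto simp: M_def\<close>)
    then show ?thesis by (simp add: causally_related_def causal_le_def)
  next
    case False
    define \<sigma> where "\<sigma> t = lB (KV XL XR (M t)) (M t ** Jrot)" for t
    have \<sigma>c: "continuous_on S \<sigma>" for S unfolding \<sigma>_def M_def by (intro continuous_intros)
    have \<sigma>nz: "\<sigma> t \<noteq> 0" for t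
    proof -
      have dM: "det (M t) = 1" unfolding M_def by (rule MM_det[OF tL tR])
      have tg: "Bv (M t) (KV XL XR (M t)) = x3 (M t) * x3 (KV XL XR (M t)) + x4 (M t) * x4 (KV XL XR (M t))"
        unfolding M_def by (rule tangency[OF MM_deriv[OF tL tR]]) (rule MM_det[OF tL tR])
      show ?thesis unfolding \<sigma>_def
        by (rule causal_lB_nonzero[OF dM tg])
           (use KV_MM_nonzero[OF tL tR False] lq_KV_MM[OF tL tR] c in \<open>simp_all add: M_def\<close>)
    qed
    show ?thesis
    proof (cases "\<sigma> 0 < 0")
      case True
      have neg: "\<sigma> t < 0" if "0 \<le> t" for t
      proof (rule ccontr)
        assume "\<not> \<sigma> t < 0"
        then have "\<sigma> 0 \<le> 0" "0 \<le> \<sigma> t" using True by auto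
        from IVT'[OF this that \<sigma>c] \<sigma>nz show False by blast
      qed
      have "future_causal_curve (\<lambda>s. L (0 + h * s))"
      proof (rule orbit_curve[OF tL tR Lc Lp])
        show "h \<noteq> 0" using h by simp
        show "KV XL XR (cov_proj x) \<noteq> 0" by (rule False)
        show "lq (KV XL XR (cov_proj x)) \<le> 0" by (rule c)
        fix s :: real assume "s \<in> {0..1}"
        then have "\<sigma> (0 + h * s) < 0" using h by (intro neg) simp
        then show "h * lB (KV XL XR (MM XL XR (cov_proj x) (0 + h * s))) (MM XL XR (cov_proj x) (0 + h * s) ** Jrot) < 0"
          using h by (simp add: \<sigma>_def M_def mult_pos_neg)
      qed
      then have "causal_le x (L h)" unfolding causal_le_def using L0
        by (intro disjI2 exI[of _ "\<lambda>s. L (0 + h * s)"]) auto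
      then show ?thesis by (simp add: causally_related_def)
    next
      case False
      then have pos0: "\<sigma> 0 > 0" using \<sigma>nz[of 0] by linarith
      have pos: "\<sigma> t > 0" if "0 \<le> t" for t
      proof (rule ccontr)
        assume "\<not> \<sigma> t > 0"
        then have "\<sigma> t \<le> 0" "0 \<le> \<sigma> 0" using pos0 by auto
        from IVT2'[OF this that \<sigma>c] \<sigma>nz show False by blast
      qed
      have "future_causal_curve (\<lambda>s. L (h + (- h) * s))"
      proof (rule orbit_curve[OF tL tR Lc Lp])
        show "- h \<noteq> 0" using h by simp
        show "KV XL XR (cov_proj x) \<noteq> 0" using \<open>KV XL XR (cov_proj x) \<noteq> 0\<close> .
        show "lq (KV XL XR (cov_proj x)) \<le> 0" by (rule c)
        fix s :: real assume s: "s \<in> {0..1}"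
        have "0 \<le> h + (- h) * s" using s h by (simp add: algebra_simps mult_le_cancel_left1)
        then have "\<sigma> (h + (- h) * s) > 0" by (rule pos)
        then show "(- h) * lB (KV XL XR (MM XL XR (cov_proj x) (h + (- h) * s))) (MM XL XR (cov_proj x) (h + (- h) * s) ** Jrot) < 0"
          using h by (simp add: \<sigma>_def M_def)
      qed
      then have "causal_le (L h) x" unfolding causal_le_def using L0
        by (intro disjI2 exI[of _ "\<lambda>s. L (h + (- h) * s)"]) auto
      then show ?thesis by (simp add: causally_related_def)
    qed
  qed
  then show False using xC La[of h] by (simp add: Cset_def h_def)
qed

theorem mainTheorem4:
  fixes XL XR :: mat2
  assumes "XL \<in> sl2" and "XR \<in> sl2"
    and "synchronized (texp XL, texp XR)"
  shows "Dset XL XR = (\<Union>n\<in>{1::nat..}. Cset (flow XL XR (1 / real n)))"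
proof -
  have tL: "trace XL = 0" using assms(1) by (simp add: sl2_def)
  have tR: "trace XR = 0" using assms(2) by (simp add: sl2_def)
  show ?thesis
  proof
    show "Dset XL XR \<subseteq> (\<Union>n\<in>{1::nat..}. Cset (flow XL XR (1 / real n)))"
      using D_sub[OF tL tR] by blast
    show "(\<Union>n\<in>{1::nat..}. Cset (flow XL XR (1 / real n))) \<subseteq> Dset XL XR"
      using C_sub[OF tL tR] by auto
  qed
qed

end
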